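(* Let $\mathbf{A}\in\mathbb{R}^{n\times d}$, $\mathbf{B}=[\mathbf{b}_1,\dots,\mathbf{b}_{d_B}]\in\mathbb{R}^{n\times d_B}$, $\mathbf{C}=[\mathbf{c}_1,\dots,\mathbf{c}_{n_C}]^{\rm T}\in\mathbb{R}^{n_C\times d}$, and let $k,r$ be integers with $1\le k\le\mathrm{rank}(\mathbf{B})$, $1\le r\le\mathrm{rank}(\mathbf{C})$. Let $S$ be an $l$-subset of $[d_B]$ with $0\le l\le k-1$ and $R$ a $t$-subset of $[n_C]$ with $0\le t\le r-1$. Then $$P_{k-l,r-t}(x;\mathbf{Q}_S\mathbf{A}\mathbf{P}_R,\mathbf{Q}_S\mathbf{B},\mathbf{C}\mathbf{P}_R)=\frac1{k-l}\sum_{i:\|\mathbf{Q}_S\mathbf{b}_i\|\ne0}\|\mathbf{Q}_S\mathbf{b}_i\|^2\,P_{k-l-1,r-t}(x;\mathbf{Q}_{S\cup\{i\}}\mathbf{A}\mathbf{P}_R,\mathbf{Q}_{S\cup\{i\}}\mathbf{B},\mathbf{C}\mathbf{P}_R)$$ and $$P_{k-l,r-t}(x;\mathbf{Q}_S\mathbf{A}\mathbf{P}_R,\mathbf{Q}_S\mathbf{B},\mathbf{C}\mathbf{P}_R)=\frac1{r-t}\sum_{i:\|\mathbf{c}_i^{\rm T}\mathbf{P}_R\|\ne0}\|\mathbf{c}_i^{\rm T}\mathbf{P}_R\|^2\,P_{k-l,r-t-1}(x;\mathbf{Q}_S\mathbf{A}\mathbf{P}_{R\cup\{i\}},\mathb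f{Q}_S\mathbf{B},\mathbf{C}\mathbf{P}_{R\cup\{i\}}).$$
   Context: Notation: $\mathbf{M}_{R,S}$, $\mathbf{M}_{:,S}$, $\mathbf{M}_{R,:}$ are submatrices; $\mathbf{M}^\dagger$ Moore–Penrose pseudoinverse with $\mathbf{M}_{R,S}^\dagger:=(\mathbf{M}_{R,S})^\dagger$; empty determinants are $1$ and $\mathbf{M}_{:,\emptyset}\mathbf{M}_{:,\emptyset}^\dagger$, $\mathbf{M}_{\emptyset,:}^\dagger\mathbf{M}_{\emptyset,:}$ are zero. $\mathbf{Q}_S=\mathbf{I}_n-\mathbf{B}_{:,S}\mathbf{B}_{:,S}^\dagger$ and $\mathbf{P}_R=\mathbf{I}_d-\mathbf{C}_{R,:}^\dagger\mathbf{C}_{R,:}$ (always formed from the original $\mathbf{B},\mathbf{C}$). For general $\mathbf{A}'\in\mathbb{R}^{n\times d}$, $\mathbf{B}'\in\mathbb{R}^{n\times d_B}$, $\mathbf{C}'\in\mathbb{R}^{n_C\times d}$: $p_{T,W}(x;\mathbf{A}',\mathbf{B}',\mathbf{C}')=\det[x\mathbf{I}_d-(\mathbf{Q}'_T\mathbf{A}'\mathbf{P}'_W)^{\rm T}(\mathbf{Q}'_T\mathbf{A}'\mathbf{P}'_W)]$ with $\mathbf{Q}'_T=\mathbf{I}_n-\mathbf{B}'_{:,T}\mathbf{B}'^\dagger_{:,T}$, $\mathbf{P}'_W=\mathbf{I}_d-\mathbf{C}'^\dagger_{W,:}\mathbf{C}'_{W,:}$, and $P_{k,r}(x;\mathbf{A}',\mathbf{B}',\mathbf{C}')=\sum_{W\subset[n_C],|W|=r}\sum_{T\subset[d_B],|T|=k}\det[\mathbf{C}'_{W,:}\mathbf{C}'^{\rm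 T}_{W,:}]\det[\mathbf{B}'^{\rm T}_{:,T}\mathbf{B}'_{:,T}]\,p_{T,W}(x;\mathbf{A}',\mathbf{B}',\mathbf{C}')$. *)

theory Defs
  imports "Jordan_Normal_Form.Char_Poly" "Jordan_Normal_Form.DL_Rank" "Jordan_Normal_Form.DL_Submatrix"
begin

text \<open>Matrices are Jordan_Normal_Form matrices of type real mat; index sets [m] are {0..<m}
  (0-based). Columns of B are col B i, rows of C are row C i.\<close>

definition pinv :: "real mat \<Rightarrow> real mat" where
  "pinv M = (THE X. X \<in> carrier_mat (dim_col M) (dim_row M) \<and>
      M * X * M = M \<and> X * M * X = X \<and>
      transpose_mat (M * X) = M * X \<and> transpose_mat (X * M) = X * M)"

definition cols_sub :: "real mat \<Rightarrow> nat set \<Rightarrow> real mat" where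
  "cols_sub M S = submatrix M {0..<dim_row M} S"

definition rows_sub :: "real mat \<Rightarrow> nat set \<Rightarrow> real mat" where
  "rows_sub M R = submatrix M R {0..<dim_col M}"

definition Qproj :: "real mat \<Rightarrow> nat set \<Rightarrow> real mat" where
  "Qproj B T = 1\<^sub>m (dim_row B) - cols_sub B T * pinv (cols_sub B T)"

definition Pproj :: "real mat \<Rightarrow> nat set \<Rightarrow> real mat" where
  "Pproj C W = 1\<^sub>m (dim_col C) - pinv (rows_sub C W) * rows_sub C W"

definition pTW :: "nat set \<Rightarrow> nat set \<Rightarrow> real mat \<Rightarrow> real mat \<Rightarrow> real mat \<Rightarrow> real poly" where
  "pTW T W A' B' C' =
     (let M = Qproj B' T * A' * Pproj C' W in char_poly (transpose_mat M * M))"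

definition Pkr :: "nat \<Rightarrow> nat \<Rightarrow> real mat \<Rightarrow> real mat \<Rightarrow> real mat \<Rightarrow> real poly" where
  "Pkr k r A' B' C' =
     (\<Sum>W | W \<subseteq> {0..<dim_row C'} \<and> card W = r.
       \<Sum>T | T \<subseteq> {0..<dim_col B'} \<and> card T = k.
         Polynomial.smult (det (rows_sub C' W * transpose_mat (rows_sub C' W)) *
                det (transpose_mat (cols_sub B' T) * cols_sub B' T))
               (pTW T W A' B' C'))"

definition vnorm :: "real vec \<Rightarrow> real" where
  "vnorm v = sqrt (v \<bullet> v)"

definition mrank :: "real mat \<Rightarrow> nat" where
  "mrank M = vec_space.rank (dim_row M) M"

end

theory Submission
  imports Defs
begin

lemma col_carrier_n: "A \<in> carrier_mat n m \<Longrightarrow> col A j \<in> carrier_vec n"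
  unfolding carrier_vec_def carrier_mat_def by auto

lemma row_carrier_m: "A \<in> carrier_mat n m \<Longrightarrow> row A j \<in> carrier_vec m"
  unfolding carrier_vec_def carrier_mat_def by auto

lemma dot_self_nonneg: "(v::real vec) \<bullet> v \<ge> 0"
  unfolding scalar_prod_def by (intro sum_nonneg) auto

lemma dot_self_zero: assumes "(v::real vec) \<in> carrier_vec n" "v \<bullet> v = 0" shows "v = 0\<^sub>v n"
proof -
  have "(\<Sum>i\<in>{0..<dim_vec v}. v$i * v$i) = 0" using assms(2) unfolding scalar_prod_def .
  hence "\<forall>i\<in>{0..<dim_vec v}. v$i * v$i = 0" by (subst (asm) sum_nonneg_eq_0_iff) auto
  thus ?thesis using assms(1) by (intro eq_vecI) auto
qed

lemma mult_unit_col: assumes "(A::real mat) \<in> carrier_mat n m" "j < m" shows "A *\<^sub>v unit_vec m j = col A j"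
  using assms by (intro eq_vecI) auto

lemma mat_eq_mv: assumes "(A::real mat) \<in> carrier_mat n m" "B \<in> carrier_mat n m"
  "\<And>x. x \<in> carrier_vec m \<Longrightarrow> A *\<^sub>v x = B *\<^sub>v x" shows "A = B"
proof (rule eq_matI)
  fix i j assume "i < dim_row B" "j < dim_col B"
  hence ij: "i < n" "j < m" using assms by auto
  have "A $$ (i,j) = col A j $ i" using assms ij by auto
  also have "... = (A *\<^sub>v unit_vec m j) $ i" using mult_unit_col[OF assms(1) ij(2)] by simp
  also have "... = (B *\<^sub>v unit_vec m j) $ i" using assms(3) by simp
  also have "... = col B j $ i" using mult_unit_col[OF assms(2) ij(2)] by simp
  also have "... = B $$ (i,j)" using assms ij by auto
  finally show "A $$ (i,j) = B $$ (i,j)" .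
qed (use assms in auto)

lemma mat_eq_cols: assumes "(A::real mat) \<in> carrier_mat n m" "B \<in> carrier_mat n m"
  "\<And>j. j < m \<Longrightarrow> col A j = col B j" shows "A = B"
proof (rule eq_matI)
  fix i j assume "i < dim_row B" "j < dim_col B"
  hence ij: "i < n" "j < m" using assms by auto
  have "A $$ (i,j) = col A j $ i" using assms(1) ij by simp
  also have "... = col B j $ i" by (simp only: assms(3)[OF ij(2)])
  also have "... = B $$ (i,j)" using assms(2) ij by simp
  finally show "A $$ (i,j) = B $$ (i,j)" .
qed (use assms in auto)

lemma sym_dot: assumes "(P::real mat) \<in> carrier_mat n n" "transpose_mat P = P"
  "x \<in> carrier_vec n" "y \<in> carrier_vec n"
  shows "(P *\<^sub>v x) \<bullet> y = x \<bullet> (P *\<^sub>v y)"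
proof -
  have "(transpose_mat P *\<^sub>v x) \<bullet> y = x \<bullet> (P *\<^sub>v y)"
    by (rule transpose_vec_mult_scalar[OF assms(1) assms(4) assms(3)])
  thus ?thesis using assms(2) by simp
qed

definition penrose :: "real mat \<Rightarrow> real mat \<Rightarrow> bool" where
 "penrose M X \<longleftrightarrow> X \<in> carrier_mat (dim_col M) (dim_row M) \<and> M * X * M = M \<and> X * M * X = X
    \<and> transpose_mat (M * X) = M * X \<and> transpose_mat (X * M) = X * M"

lemma penrose_unique: assumes M: "M \<in> carrier_mat n m" and X: "penrose M X" and Y: "penrose M Y"
  shows "X = Y"
proof -
  have Xc: "X \<in> carrier_mat m n" and Yc: "Y \<in> carrier_mat m n" using X Y M unfolding penrose_def by auto
  have MXM: "M * X * M = M" and XMX: "X * M * X = X" and sX1: "transpose_mat (M * X) = M * X"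
    and sX2: "transpose_mat (X * M) = X * M" using X unfolding penrose_def by auto
  have MYM: "M * Y * M = M" and YMY: "Y * M * Y = Y" and sY1: "transpose_mat (M * Y) = M * Y"
    and sY2: "transpose_mat (Y * M) = Y * M" using Y unfolding penrose_def by auto
  have MXc: "M * X \<in> carrier_mat n n" and MYc: "M * Y \<in> carrier_mat n n" using M Xc Yc by auto
  have XMc: "X * M \<in> carrier_mat m m" and YMc: "Y * M \<in> carrier_mat m m" using M Xc Yc by auto
  have tM: "transpose_mat M = transpose_mat M * (M * Y)"
  proof -
    have "transpose_mat M = transpose_mat (M * Y * M)" using MYM by simp
    also have "\<dots> = transpose_mat M * transpose_mat (M * Y)" by (rule transpose_mult[OF MYc M])
    finally show ?thesis using sY1 by simp
  qed
  have e1: "M * X = M * Y"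
  proof -
    have "M * X = transpose_mat X * transpose_mat M" using sX1 transpose_mult[OF M Xc] by simp
    also have "\<dots> = transpose_mat X * (transpose_mat M * (M * Y))" using tM by simp
    also have "\<dots> = (transpose_mat X * transpose_mat M) * (M * Y)"
      by (rule assoc_mult_mat[symmetric], insert M Xc MYc, auto)
    also have "transpose_mat X * transpose_mat M = M * X" using sX1 transpose_mult[OF M Xc] by simp
    also have "(M * X) * (M * Y) = (M * X * M) * Y" by (rule assoc_mult_mat[symmetric, OF MXc M Yc])
    also have "\<dots> = M * Y" using MXM by simp
    finally show ?thesis .
  qed
  have tM2: "transpose_mat M = (Y * M) * transpose_mat M"
  proof -
    have "transpose_mat M = transpose_mat (M * (Y * M))" using MYM assoc_mult_mat[OF M Yc M] by simp
    also have "\<dots> = transpose_mat (Y * M) * transpose_mat M" by (rule transpose_mult[OF M YMc])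
    finally show ?thesis using sY2 by simp
  qed
  have e2: "X * M = Y * M"
  proof -
    have "X * M = transpose_mat M * transpose_mat X" using sX2 transpose_mult[OF Xc M] by simp
    also have "\<dots> = ((Y * M) * transpose_mat M) * transpose_mat X" using tM2 by simp
    also have "\<dots> = (Y * M) * (transpose_mat M * transpose_mat X)"
      by (rule assoc_mult_mat, insert M Xc YMc, auto)
    also have "transpose_mat M * transpose_mat X = X * M" using sX2 transpose_mult[OF Xc M] by simp
    also have "(Y * M) * (X * M) = Y * (M * X * M)"
      using assoc_mult_mat[OF Yc M XMc] assoc_mult_mat[OF M Xc M] by simp
    also have "\<dots> = Y * M" using MXM by simp
    finally show ?thesis .
  qed
  have "X = X * M * X" using XMX by simp
  also have "\<dots> = X * (M * Y)" using assoc_mult_mat[OF Xc M Xc] e1 by simp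
  also have "\<dots> = (X * M) * Y" using assoc_mult_mat[OF Xc M Yc] by simp
  also have "\<dots> = Y * M * Y" using e2 by simp
  also have "\<dots> = Y" using YMY .
  finally show ?thesis .
qed

lemma split_mv: assumes M: "(M::real mat) \<in> carrier_mat n (Suc m)" and y: "y \<in> carrier_vec m"
  shows "M *\<^sub>v vec (Suc m) (\<lambda>j. if j < m then y$j else c) = mat n m (\<lambda>(i,j). M$$(i,j)) *\<^sub>v y + c \<cdot>\<^sub>v col M m"
proof (rule eq_vecI)
  fix i assume "i < dim_vec (mat n m (\<lambda>(i,j). M$$(i,j)) *\<^sub>v y + c \<cdot>\<^sub>v col M m)"
  hence i: "i < n" using M by simp
  have "(M *\<^sub>v vec (Suc m) (\<lambda>j. if j < m then y$j else c)) $ i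
      = (\<Sum>j\<in>{0..<Suc m}. M$$(i,j) * (if j < m then y$j else c))"
    using M i by (simp add: scalar_prod_def)
  also have "\<dots> = (\<Sum>j\<in>{0..<m}. M$$(i,j) * y$j) + M$$(i,m) * c"
    by (subst sum.atLeast0_lessThan_Suc) simp
  also have "\<dots> = (mat n m (\<lambda>(i,j). M$$(i,j)) *\<^sub>v y + c \<cdot>\<^sub>v col M m) $ i"
    using M i y by (simp add: scalar_prod_def)
  finally show "(M *\<^sub>v vec (Suc m) (\<lambda>j. if j < m then y$j else c)) $ i = (mat n m (\<lambda>(i,j). M$$(i,j)) *\<^sub>v y + c \<cdot>\<^sub>v col M m) $ i" .
qed (use M in auto)

lemma proj_exists: "(M::real mat) \<in> carrier_mat n m \<Longrightarrow> \<exists>P \<in> carrier_mat n n. transpose_mat P = P \<and> P * P = P \<and> P * M = M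
   \<and> (\<forall>x\<in>carrier_vec n. \<exists>y\<in>carrier_vec m. P *\<^sub>v x = M *\<^sub>v y)"
proof (induction m arbitrary: M)
  case 0
  show ?case
  proof (intro bexI[of _ "0\<^sub>m n n"] conjI ballI)
    show "transpose_mat (0\<^sub>m n n) = (0\<^sub>m n n :: real mat)" by simp
    show "0\<^sub>m n n * 0\<^sub>m n n = (0\<^sub>m n n :: real mat)" by (intro eq_matI) auto
    show "0\<^sub>m n n * M = M" using 0 by (intro eq_matI) auto
    fix x :: "real vec" assume x: "x \<in> carrier_vec n"
    show "\<exists>y\<in>carrier_vec 0. 0\<^sub>m n n *\<^sub>v x = M *\<^sub>v y" using 0 x
      by (intro bexI[of _ "0\<^sub>v 0"] eq_vecI) (auto simp: scalar_prod_def)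
  qed auto
next
  case (Suc m)
  define M0 where "M0 = mat n m (\<lambda>(i,j). M$$(i,j))"
  define v where "v = col M m"
  have M: "M \<in> carrier_mat n (Suc m)" by fact
  have M0c: "M0 \<in> carrier_mat n m" unfolding M0_def by simp
  have vc: "v \<in> carrier_vec n" using M unfolding v_def carrier_vec_def by auto
  have colM: "\<And>j. j < m \<Longrightarrow> col M j = col M0 j" unfolding M0_def using M by (intro eq_vecI) auto
  from Suc.IH[OF M0c] obtain P0 where P0c: "P0 \<in> carrier_mat n n" and sP0: "transpose_mat P0 = P0"
    and iP0: "P0 * P0 = P0" and PM0: "P0 * M0 = M0"
    and rP0: "\<forall>x\<in>carrier_vec n. \<exists>y\<in>carrier_vec m. P0 *\<^sub>v x = M0 *\<^sub>v y" by blast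
  have P0P0: "\<And>x. x \<in> carrier_vec n \<Longrightarrow> P0 *\<^sub>v (P0 *\<^sub>v x) = P0 *\<^sub>v x"
    using iP0 P0c by (metis assoc_mult_mat_vec)
  have P0col: "\<And>j. j < m \<Longrightarrow> P0 *\<^sub>v col M0 j = col M0 j" using PM0 col_mult2[OF P0c M0c] by metis
  define w where "w = v - P0 *\<^sub>v v"
  have wc: "w \<in> carrier_vec n" unfolding w_def using vc P0c by simp
  have P0w: "P0 *\<^sub>v w = 0\<^sub>v n"
  proof -
    have "P0 *\<^sub>v w = P0 *\<^sub>v v - P0 *\<^sub>v (P0 *\<^sub>v v)" unfolding w_def
      by (rule mult_minus_distrib_mat_vec[OF P0c vc], insert P0c vc, auto)
    also have "\<dots> = 0\<^sub>v n" using P0P0[OF vc] P0c vc by (intro eq_vecI) auto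
    finally show ?thesis .
  qed
  have wP0: "\<And>x. x \<in> carrier_vec n \<Longrightarrow> w \<bullet> (P0 *\<^sub>v x) = 0"
    using sym_dot[OF P0c sP0 wc] P0w by simp
  have wcol: "\<And>j. j < m \<Longrightarrow> w \<bullet> col M0 j = 0" using wP0 P0col M0c by (metis col_carrier_vec)
  have vw: "v = w + P0 *\<^sub>v v" unfolding w_def using vc P0c by (intro eq_vecI) auto
  show ?case
  proof (cases "w = 0\<^sub>v n")
    case True
    hence P0v: "P0 *\<^sub>v v = v" using vw P0c vc by (metis carrier_vecD left_zero_vec mult_mat_vec_carrier)
    show ?thesis
    proof (intro bexI[of _ P0] conjI ballI)
      show "P0 * M = M"
      proof (rule mat_eq_cols[of _ n "Suc m"])
        fix j assume j: "j < Suc m"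
        show "col (P0 * M) j = col M j"
        proof (cases "j < m")
          case True thus ?thesis using col_mult2[OF P0c M j] colM P0col by simp
        next
          case False hence "j = m" using j by simp
          thus ?thesis using col_mult2[OF P0c M j] P0v unfolding v_def by simp
        qed
      qed (use P0c M in auto)
      fix x :: "real vec" assume x: "x\<in>carrier_vec n"
      from rP0 x obtain y where y: "y \<in> carrier_vec m" "P0 *\<^sub>v x = M0 *\<^sub>v y" by blast
      show "\<exists>y\<in>carrier_vec (Suc m). P0 *\<^sub>v x = M *\<^sub>v y"
      proof (intro bexI[of _ "vec (Suc m) (\<lambda>j. if j < m then y$j else 0)"])
        show "P0 *\<^sub>v x = M *\<^sub>v vec (Suc m) (\<lambda>j. if j < m then y $ j else 0)"
          unfolding split_mv[OF M y(1)] y(2) M0_def[symmetric] using M M0c y(1) by (intro eq_vecI) auto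
      qed simp
    qed (use P0c sP0 iP0 in auto)
  next
    case False
    define c where "c = w \<bullet> w"
    have cpos: "c > 0" using dot_self_nonneg[of w] dot_self_zero[OF wc] False unfolding c_def by force
    define W where "W = mat n n (\<lambda>(i,j). w$i * w$j)"
    define P where "P = P0 + (1/c) \<cdot>\<^sub>m W"
    have Pc: "P \<in> carrier_mat n n" unfolding P_def W_def using P0c by simp
    have Pmv: "P *\<^sub>v x = P0 *\<^sub>v x + ((w \<bullet> x)/c) \<cdot>\<^sub>v w" if x: "x \<in> carrier_vec n" for x
    proof (rule eq_vecI)
      fix i assume "i < dim_vec (P0 *\<^sub>v x + ((w \<bullet> x)/c) \<cdot>\<^sub>v w)"
      hence i: "i < n" using P0c wc by simp
      have "(P *\<^sub>v x) $ i = (\<Sum>j\<in>{0..<n}. (P0$$(i,j) + (1/c) * (w$i * w$j)) * x$j)"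
        using i x P0c unfolding P_def W_def by (simp add: scalar_prod_def)
      also have "\<dots> = (\<Sum>j\<in>{0..<n}. P0$$(i,j) * x$j) + (1/c) * w$i * (\<Sum>j\<in>{0..<n}. w$j * x$j)"
        by (simp add: algebra_simps sum.distrib sum_distrib_left)
      also have "\<dots> = (P0 *\<^sub>v x + ((w \<bullet> x)/c) \<cdot>\<^sub>v w) $ i"
        using i x P0c wc by (simp add: scalar_prod_def)
      finally show "(P *\<^sub>v x) $ i = (P0 *\<^sub>v x + ((w \<bullet> x)/c) \<cdot>\<^sub>v w) $ i" .
    qed (use Pc P0c wc in auto)
    have P0Pmv: "P0 *\<^sub>v (P *\<^sub>v x) = P0 *\<^sub>v x" if x: "x \<in> carrier_vec n" for x
    proof -
      have "P0 *\<^sub>v (P *\<^sub>v x) = P0 *\<^sub>v (P0 *\<^sub>v x) + P0 *\<^sub>v (((w \<bullet> x)/c) \<cdot>\<^sub>v w)"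
        unfolding Pmv[OF x] by (rule mult_add_distrib_mat_vec[OF P0c], insert P0c x wc, auto)
      also have "\<dots> = P0 *\<^sub>v x" unfolding P0P0[OF x] mult_mat_vec[OF P0c wc] P0w
        using P0c x by (intro eq_vecI) auto
      finally show ?thesis .
    qed
    have wPmv: "w \<bullet> (P *\<^sub>v x) = w \<bullet> x" if x: "x \<in> carrier_vec n" for x
    proof -
      have "w \<bullet> (P *\<^sub>v x) = w \<bullet> (P0 *\<^sub>v x) + w \<bullet> (((w \<bullet> x)/c) \<cdot>\<^sub>v w)"
        unfolding Pmv[OF x] by (rule scalar_prod_add_distrib[of _ n], insert P0c x wc, auto)
      also have "\<dots> = ((w \<bullet> x)/c) * c" using wP0[OF x] wc unfolding c_def by simp
      also have "\<dots> = w \<bullet> x" using cpos by simp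
      finally show ?thesis .
    qed
    show ?thesis
    proof (intro bexI[of _ P] conjI ballI)
      show "transpose_mat P = P"
      proof (rule eq_matI)
        fix i j assume ij: "i < dim_row P" "j < dim_col P"
        hence ij': "i < n" "j < n" using Pc by auto
        have "P0 $$ (j,i) = P0 $$ (i,j)" using sP0 ij' P0c by (metis carrier_matD index_transpose_mat(1))
        thus "transpose_mat P $$ (i, j) = P $$ (i, j)" using ij' P0c unfolding P_def W_def by simp
      qed (use Pc in auto)
      show "P * P = P"
      proof (rule mat_eq_mv[of _ n n])
        fix x :: "real vec" assume x: "x \<in> carrier_vec n"
        have "(P * P) *\<^sub>v x = P *\<^sub>v (P *\<^sub>v x)" using Pc x by simp
        also have "\<dots> = P0 *\<^sub>v x + ((w \<bullet> x)/c) \<cdot>\<^sub>v w"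
          unfolding Pmv[OF mult_mat_vec_carrier[OF Pc x]] P0Pmv[OF x] wPmv[OF x] ..
        also have "\<dots> = P *\<^sub>v x" using Pmv[OF x] by simp
        finally show "(P * P) *\<^sub>v x = P *\<^sub>v x" .
      qed (use Pc in auto)
      show "P * M = M"
      proof (rule mat_eq_cols[of _ n "Suc m"])
        fix j assume j: "j < Suc m"
        show "col (P * M) j = col M j"
        proof (cases "j < m")
          case True
          have cc: "col M0 j \<in> carrier_vec n" using M0c by (rule col_carrier_n)
          have "col (P * M) j = P *\<^sub>v col M0 j" using col_mult2[OF Pc M j] colM[OF True] by simp
          also have "\<dots> = col M0 j" unfolding Pmv[OF cc] P0col[OF True] wcol[OF True] using cc wc M0c
            by (intro eq_vecI) auto
          finally show ?thesis using colM[OF True] by simp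
        next
          case False hence jm: "j = m" using j by simp
          have wv: "w \<bullet> v = c" unfolding c_def
            by (subst vw, subst scalar_prod_add_distrib[of _ n], insert wc vc P0c wP0[OF vc], auto)
          have "col (P * M) j = P *\<^sub>v v" using col_mult2[OF Pc M j] jm unfolding v_def by simp
          also have "\<dots> = v" unfolding Pmv[OF vc] wv using cpos vc wc P0c unfolding w_def
            by (intro eq_vecI) auto
          finally show ?thesis unfolding v_def jm .
        qed
      qed (use Pc M in auto)
      fix x :: "real vec" assume x: "x\<in>carrier_vec n"
      from rP0 x obtain y where y: "y \<in> carrier_vec m" "P0 *\<^sub>v x = M0 *\<^sub>v y" by blast
      from rP0 vc obtain y1 where y1: "y1 \<in> carrier_vec m" "P0 *\<^sub>v v = M0 *\<^sub>v y1" by blast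
      define a where "a = (w \<bullet> x)/c"
      have yy: "y - a \<cdot>\<^sub>v y1 \<in> carrier_vec m" using y y1 by simp
      show "\<exists>y\<in>carrier_vec (Suc m). P *\<^sub>v x = M *\<^sub>v y"
      proof (intro bexI[of _ "vec (Suc m) (\<lambda>j. if j < m then (y - a \<cdot>\<^sub>v y1)$j else a)"])
        have e: "M0 *\<^sub>v (y - a \<cdot>\<^sub>v y1) = M0 *\<^sub>v y - a \<cdot>\<^sub>v (M0 *\<^sub>v y1)"
          using mult_minus_distrib_mat_vec[OF M0c y(1), of "a \<cdot>\<^sub>v y1"] mult_mat_vec[OF M0c y1(1)] y1 by simp
        show "P *\<^sub>v x = M *\<^sub>v vec (Suc m) (\<lambda>j. if j < m then (y - a \<cdot>\<^sub>v y1) $ j else a)"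
          unfolding split_mv[OF M yy] M0_def[symmetric] e Pmv[OF x] a_def[symmetric] v_def[symmetric]
          using y y1 M0c P0c x vc unfolding w_def by (intro eq_vecI) (auto simp: algebra_simps)
      qed simp
    qed (use Pc in auto)
  qed
qed

lemma self_carrier: "M \<in> carrier_mat (dim_row M) (dim_col M)" by (rule carrier_matI) auto

lemma range_to_mat: assumes P: "(P::real mat) \<in> carrier_mat n n" and M: "M \<in> carrier_mat n m"
  and r: "\<forall>x\<in>carrier_vec n. \<exists>y\<in>carrier_vec m. P *\<^sub>v x = M *\<^sub>v y"
  shows "\<exists>K \<in> carrier_mat m n. P = M * K"
proof -
  have "\<forall>j. \<exists>y. j < n \<longrightarrow> y \<in> carrier_vec m \<and> P *\<^sub>v unit_vec n j = M *\<^sub>v y" using r by auto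
  then obtain ky where ky: "\<And>j. j < n \<Longrightarrow> ky j \<in> carrier_vec m \<and> P *\<^sub>v unit_vec n j = M *\<^sub>v ky j" by metis
  define K where "K = mat m n (\<lambda>(i,j). ky j $ i)"
  have Kc: "K \<in> carrier_mat m n" unfolding K_def by simp
  have colK: "col K j = ky j" if j: "j < n" for j
    using ky[OF j] j unfolding K_def by (intro eq_vecI) auto
  have "P = M * K"
  proof (rule mat_eq_cols[of _ n n])
    fix j assume j: "j < n"
    show "col P j = col (M * K) j"
      using col_mult2[OF M Kc j] colK[OF j] ky[OF j] mult_unit_col[OF P j] by simp
  qed (use P M Kc in auto)
  thus ?thesis using Kc by blast
qed

lemma pinv_exists: assumes M: "(M::real mat) \<in> carrier_mat n m" shows "\<exists>X. penrose M X"
proof -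
  obtain Pc where Pcc: "Pc \<in> carrier_mat n n" and sPc: "transpose_mat Pc = Pc" and iPc: "Pc * Pc = Pc"
    and PcM: "Pc * M = M" and rPc: "\<forall>x\<in>carrier_vec n. \<exists>y\<in>carrier_vec m. Pc *\<^sub>v x = M *\<^sub>v y"
    using proj_exists[OF M] by blast
  have Mt: "transpose_mat M \<in> carrier_mat m n" using M by simp
  obtain Pr where Prc: "Pr \<in> carrier_mat m m" and sPr: "transpose_mat Pr = Pr" and iPr: "Pr * Pr = Pr"
    and PrM: "Pr * transpose_mat M = transpose_mat M"
    and rPr: "\<forall>x\<in>carrier_vec m. \<exists>y\<in>carrier_vec n. Pr *\<^sub>v x = transpose_mat M *\<^sub>v y"
    using proj_exists[OF Mt] by blast
  obtain K where Kc: "K \<in> carrier_mat m n" and PcK: "Pc = M * K" using range_to_mat[OF Pcc M rPc] by blast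
  obtain L where Lc: "L \<in> carrier_mat n m" and PrL: "Pr = transpose_mat M * L" using range_to_mat[OF Prc Mt rPr] by blast
  have MPr: "M * Pr = M"
  proof -
    have "M * Pr = transpose_mat (Pr * transpose_mat M)"
      using transpose_mult[OF Prc Mt] sPr by simp
    thus ?thesis using PrM by simp
  qed
  have PrLM: "Pr = transpose_mat L * M"
  proof -
    have "Pr = transpose_mat (transpose_mat M * L)" using PrL sPr by simp
    thus ?thesis using transpose_mult[OF Mt Lc] by simp
  qed
  define X where "X = Pr * K * Pc"
  have Xc: "X \<in> carrier_mat m n" unfolding X_def using Prc Kc Pcc by simp
  have MX: "M * X = Pc"
  proof -
    have "M * X = ((M * Pr) * K) * Pc" unfolding X_def
      using assoc_mult_mat[OF M Prc Kc] assoc_mult_mat[OF M _ Pcc, of "Pr * K"] Prc Kc by simp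
    thus ?thesis using MPr PcK[symmetric] iPc by simp
  qed
  have XM: "X * M = Pr"
  proof -
    have Ltc: "transpose_mat L \<in> carrier_mat m n" using Lc by simp
    have "X * M = (Pr * K) * (Pc * M)" unfolding X_def
      using assoc_mult_mat[OF _ Pcc M, of "Pr * K" m] Prc Kc by simp
    also have "\<dots> = (transpose_mat L * M) * K * M" using PcM PrLM by simp
    also have "\<dots> = transpose_mat L * ((M * K) * M)"
      using assoc_mult_mat[OF Ltc M Kc] assoc_mult_mat[OF _ Kc M, of "transpose_mat L * M" m]
        assoc_mult_mat[OF Ltc _ M, of "M * K"] Ltc M Kc by simp
    also have "\<dots> = Pr" using PcK[symmetric] PcM PrLM by simp
    finally show ?thesis .
  qed
  have "penrose M X" unfolding penrose_def
  proof (intro conjI)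
    show "X \<in> carrier_mat (dim_col M) (dim_row M)" using Xc M by simp
    show "M * X * M = M" using MX PcM by simp
    show "X * M * X = X" unfolding XM unfolding X_def
      using assoc_mult_mat[OF Prc Prc Kc] iPr assoc_mult_mat[OF _ Kc Pcc, of "Pr * Pr" m]
        assoc_mult_mat[OF Prc _ Pcc, of "Pr * K"] Prc Kc by simp
    show "transpose_mat (M * X) = M * X" using MX sPc by simp
    show "transpose_mat (X * M) = X * M" using XM sPr by simp
  qed
  thus ?thesis by blast
qed

lemma pinv_penrose: assumes M: "M \<in> carrier_mat n m" shows "penrose M (pinv M)"
proof -
  obtain X where X: "penrose M X" using pinv_exists[OF M] by blast
  have "pinv M = X" unfolding pinv_def
  proof (rule the_equality)
    show "X \<in> carrier_mat (dim_col M) (dim_row M) \<and> M * X * M = M \<and> X * M * X = X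
    \<and> transpose_mat (M * X) = M * X \<and> transpose_mat (X * M) = X * M" using X unfolding penrose_def .
    fix Y assume "Y \<in> carrier_mat (dim_col M) (dim_row M) \<and> M * Y * M = M \<and> Y * M * Y = Y
    \<and> transpose_mat (M * Y) = M * Y \<and> transpose_mat (Y * M) = Y * M"
    hence "penrose M Y" unfolding penrose_def .
    thus "Y = X" using penrose_unique[OF M X] by simp
  qed
  thus ?thesis using X by simp
qed

lemma pinv_penrose': "penrose M (pinv M)"
  by (rule pinv_penrose[OF carrier_matI[OF refl refl]])

lemma pinv_transpose: "pinv (transpose_mat M) = transpose_mat (pinv M)"
proof -
  define X where "X = pinv M"
  have Mc: "M \<in> carrier_mat (dim_row M) (dim_col M)" by (rule carrier_matI) auto
  have Mt: "transpose_mat M \<in> carrier_mat (dim_col M) (dim_row M)" by (rule carrier_matI) auto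
  have P: "penrose M X" unfolding X_def by (rule pinv_penrose')
  hence Xc: "X \<in> carrier_mat (dim_col M) (dim_row M)" and MXM: "M * X * M = M" and XMX: "X * M * X = X"
    and s1: "transpose_mat (M * X) = M * X" and s2: "transpose_mat (X * M) = X * M"
    unfolding penrose_def by blast+
  have Xt: "transpose_mat X \<in> carrier_mat (dim_row M) (dim_col M)" using transpose_carrier_mat Xc by blast
  have MXc: "M * X \<in> carrier_mat (dim_row M) (dim_row M)" using mult_carrier_mat[OF Mc Xc] .
  have XMc: "X * M \<in> carrier_mat (dim_col M) (dim_col M)" using mult_carrier_mat[OF Xc Mc] .
  have t1: "transpose_mat (M * X * M) = transpose_mat M * transpose_mat X * transpose_mat M"
  proof -
    have "transpose_mat (M * X * M) = transpose_mat M * transpose_mat (M * X)" by (rule transpose_mult[OF MXc Mc])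
    also have "transpose_mat (M * X) = transpose_mat X * transpose_mat M" by (rule transpose_mult[OF Mc Xc])
    also have "transpose_mat M * (transpose_mat X * transpose_mat M) = transpose_mat M * transpose_mat X * transpose_mat M"
      by (rule assoc_mult_mat[symmetric, OF Mt Xt Mt])
    finally show ?thesis .
  qed
  have t2: "transpose_mat (X * M * X) = transpose_mat X * transpose_mat M * transpose_mat X"
  proof -
    have "transpose_mat (X * M * X) = transpose_mat X * transpose_mat (X * M)" by (rule transpose_mult[OF XMc Xc])
    also have "transpose_mat (X * M) = transpose_mat M * transpose_mat X" by (rule transpose_mult[OF Xc Mc])
    also have "transpose_mat X * (transpose_mat M * transpose_mat X) = transpose_mat X * transpose_mat M * transpose_mat X"
      by (rule assoc_mult_mat[symmetric, OF Xt Mt Xt])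
    finally show ?thesis .
  qed
  have t3: "transpose_mat M * transpose_mat X = transpose_mat (X * M)" by (rule transpose_mult[OF Xc Mc, symmetric])
  have t4: "transpose_mat X * transpose_mat M = transpose_mat (M * X)" by (rule transpose_mult[OF Mc Xc, symmetric])
  have "penrose (transpose_mat M) (transpose_mat X)" unfolding penrose_def
  proof (intro conjI)
    show "transpose_mat X \<in> carrier_mat (dim_col (transpose_mat M)) (dim_row (transpose_mat M))" using Xt by simp
    show "transpose_mat M * transpose_mat X * transpose_mat M = transpose_mat M" using t1 MXM by simp
    show "transpose_mat X * transpose_mat M * transpose_mat X = transpose_mat X" using t2 XMX by simp
    show "transpose_mat (transpose_mat M * transpose_mat X) = transpose_mat M * transpose_mat X"
      unfolding t3 s2 ..
    show "transpose_mat (transpose_mat X * transpose_mat M) = transpose_mat X * transpose_mat M"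
      unfolding t4 s1 ..
  qed
  hence "transpose_mat X = pinv (transpose_mat M)"
    by (rule penrose_unique[OF Mt _ pinv_penrose'])
  thus ?thesis unfolding X_def by simp
qed

definition supp_in :: "real vec \<Rightarrow> nat set \<Rightarrow> bool" where
  "supp_in y X \<longleftrightarrow> (\<forall>j<dim_vec y. j \<notin> X \<longrightarrow> y$j = 0)"

definition isproj :: "real mat \<Rightarrow> nat set \<Rightarrow> real mat \<Rightarrow> bool" where
  "isproj B X P \<longleftrightarrow> P \<in> carrier_mat (dim_row B) (dim_row B) \<and>
     (\<forall>v\<in>carrier_vec (dim_row B). (\<forall>j\<in>X. j < dim_col B \<longrightarrow> col B j \<bullet> (P *\<^sub>v v) = 0) \<and>
        (\<exists>y\<in>carrier_vec (dim_col B). supp_in y X \<and> v - P *\<^sub>v v = B *\<^sub>v y))"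

lemma isprojD:
  assumes P: "isproj B X P" and B: "B \<in> carrier_mat n d"
  shows "P \<in> carrier_mat n n"
    and "\<And>v j. v \<in> carrier_vec n \<Longrightarrow> j\<in>X \<Longrightarrow> j<d \<Longrightarrow> col B j \<bullet> (P *\<^sub>v v) = 0"
    and "\<And>v. v \<in> carrier_vec n \<Longrightarrow> \<exists>y\<in>carrier_vec d. supp_in y X \<and> v - P *\<^sub>v v = B *\<^sub>v y"
  using P B unfolding isproj_def by auto

lemma vec_entry: "u = w \<Longrightarrow> u $ i = w $ i" by simp

lemma supp_orth: assumes B: "B \<in> carrier_mat n d" and y: "y \<in> carrier_vec d" "supp_in y X"
  and w: "w \<in> carrier_vec n"
  and o: "\<And>j. j \<in> X \<Longrightarrow> j < d \<Longrightarrow> col B j \<bullet> w = 0"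
  shows "(B *\<^sub>v y) \<bullet> w = 0"
proof -
  have "(B *\<^sub>v y) \<bullet> w = w \<bullet> (B *\<^sub>v y)" using comm_scalar_prod[of "B *\<^sub>v y" n w] B y w by simp
  also have "\<dots> = (transpose_mat B *\<^sub>v w) \<bullet> y" using transpose_vec_mult_scalar[OF B y(1) w] by simp
  also have "\<dots> = (\<Sum>j\<in>{0..<d}. (col B j \<bullet> w) * y$j)" using B y w by (simp add: scalar_prod_def)
  also have "\<dots> = 0" using o y(2) y(1) unfolding supp_in_def by (intro sum.neutral) auto
  finally show ?thesis .
qed

lemma isproj_unique: assumes B: "B \<in> carrier_mat n d" and P: "isproj B X P" and P': "isproj B X P'"
  shows "P = P'"
proof (rule mat_eq_mv[of _ n n])
  show Pc: "P \<in> carrier_mat n n" by (rule isprojD(1)[OF P B])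
  show P'c: "P' \<in> carrier_mat n n" by (rule isprojD(1)[OF P' B])
  fix v :: "real vec" assume v: "v \<in> carrier_vec n"
  obtain y where y: "y \<in> carrier_vec d" "supp_in y X" "v - P *\<^sub>v v = B *\<^sub>v y"
    using isprojD(3)[OF P B v] by blast
  obtain y' where y': "y' \<in> carrier_vec d" "supp_in y' X" "v - P' *\<^sub>v v = B *\<^sub>v y'"
    using isprojD(3)[OF P' B v] by blast
  define z where "z = P *\<^sub>v v - P' *\<^sub>v v"
  have zc: "z \<in> carrier_vec n" unfolding z_def using Pc P'c v by simp
  have "B *\<^sub>v (y' - y) = B *\<^sub>v y' - B *\<^sub>v y" by (rule mult_minus_distrib_mat_vec[OF B y'(1) y(1)])
  also have "\<dots> = (v - P' *\<^sub>v v) - (v - P *\<^sub>v v)" using y(3) y'(3) by simp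
  also have "\<dots> = z" unfolding z_def using Pc P'c v by (intro eq_vecI) auto
  finally have zB: "z = B *\<^sub>v (y' - y)" by simp
  have supp: "supp_in (y' - y) X" using y y' unfolding supp_in_def by auto
  have o: "col B j \<bullet> z = 0" if "j \<in> X" "j < d" for j
  proof -
    have "col B j \<bullet> z = col B j \<bullet> (P *\<^sub>v v) - col B j \<bullet> (P' *\<^sub>v v)" unfolding z_def
      by (rule scalar_prod_minus_distrib[of _ n], insert B Pc P'c v, auto intro: col_carrier_n)
    thus ?thesis using isprojD(2)[OF P B v that] isprojD(2)[OF P' B v that] by simp
  qed
  have "z \<bullet> z = 0" using supp_orth[OF B _ supp zc o] zB y y' by simp
  hence "z = 0\<^sub>v n" by (rule dot_self_zero[OF zc])
  show "P *\<^sub>v v = P' *\<^sub>v v"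
  proof (rule eq_vecI)
    fix i assume "i < dim_vec (P' *\<^sub>v v)"
    hence i: "i < n" using P'c by simp
    have "z $ i = 0" using \<open>z = 0\<^sub>v n\<close> i by simp
    hence "(P *\<^sub>v v)$i - (P' *\<^sub>v v)$i = 0" unfolding z_def using Pc P'c i by simp
    thus "(P *\<^sub>v v)$i = (P' *\<^sub>v v)$i" by simp
  qed (use Pc P'c in simp)
qed

definition sel :: "nat \<Rightarrow> nat set \<Rightarrow> real mat" where
  "sel d T = mat d (card T) (\<lambda>(j,p). if j = pick T p then 1 else 0)"

lemma card_sub: "T \<subseteq> {0..<d} \<Longrightarrow> card {j. j < d \<and> j \<in> T} = card T"
proof -
  assume "T \<subseteq> {0..<d}"
  hence "{j. j < d \<and> j \<in> T} = T" by auto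
  thus ?thesis by simp
qed

lemma pick_range: assumes "T \<subseteq> {0..<d}" "p < card T" shows "pick T p \<in> T" "pick T p < d"
  using pick_in_set[of p T] assms by auto

lemma pick_upto: assumes "i < n" shows "pick {0..<n} i = i"
proof -
  have "{a. a < n \<and> a \<in> UNIV} = {0..<n}" by auto
  moreover have "i < card {a. a < n \<and> a \<in> (UNIV::nat set)}" using assms by simp
  ultimately show ?thesis using pick_reduce_set[of i n UNIV] pick_UNIV by simp
qed

lemma cols_sub_carrier: assumes "B \<in> carrier_mat n d" "T \<subseteq> {0..<d}"
  shows "cols_sub B T \<in> carrier_mat n (card T)"
proof -
  have "{i. i < n \<and> i \<in> {0..<n}} = {0..<n}" by auto
  thus ?thesis using assms card_sub[OF assms(2)] unfolding cols_sub_def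
    by (intro carrier_matI) (auto simp: dim_submatrix)
qed

lemma cols_sub_index: assumes B: "B \<in> carrier_mat n d" and T: "T \<subseteq> {0..<d}" and i: "i < n" and p: "p < card T"
  shows "cols_sub B T $$ (i,p) = B $$ (i, pick T p)"
proof -
  have "{i. i < n \<and> i \<in> {0..<n}} = {0..<n}" by auto
  hence "cols_sub B T $$ (i,p) = B $$ (pick {0..<n} i, pick T p)" unfolding cols_sub_def
    using B i p card_sub[OF T] by (subst submatrix_index) auto
  thus ?thesis using pick_upto[OF i] by simp
qed

lemma col_cols_sub: assumes B: "B \<in> carrier_mat n d" and T: "T \<subseteq> {0..<d}" and p: "p < card T"
  shows "col (cols_sub B T) p = col B (pick T p)"
  using carrier_matD[OF cols_sub_carrier[OF B T]] cols_sub_index[OF B T _ p] B pick_range[OF T p] p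
  by (intro eq_vecI) auto

lemma sel_carrier: "sel d T \<in> carrier_mat d (card T)" unfolding sel_def by simp

lemma cols_sub_sel: assumes B: "B \<in> carrier_mat n d" and T: "T \<subseteq> {0..<d}"
  shows "cols_sub B T = B * sel d T"
proof (rule eq_matI)
  fix i p assume "i < dim_row (B * sel d T)" "p < dim_col (B * sel d T)"
  hence ip: "i < n" "p < card T" using B sel_carrier[of d T] by auto
  have "(B * sel d T) $$ (i,p) = (\<Sum>j\<in>{0..<d}. B $$ (i,j) * (if j = pick T p then 1 else 0))"
    using B ip unfolding sel_def by (simp add: scalar_prod_def)
  also have "\<dots> = B $$ (i, pick T p)" using pick_range[OF T ip(2)]
    by (simp add: if_distrib[of "\<lambda>x. B $$ (i, _) * x"] cong: if_cong)
  finally show "cols_sub B T $$ (i,p) = (B * sel d T) $$ (i,p)" using cols_sub_index[OF B T ip] by simp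
qed (use cols_sub_carrier[OF B T] B sel_carrier[of d T] in auto)

lemma sel_supp: assumes T: "T \<subseteq> {0..<d}" and z: "z \<in> carrier_vec (card T)"
  shows "supp_in (sel d T *\<^sub>v z) T"
  unfolding supp_in_def
proof (intro allI impI)
  fix j assume j: "j < dim_vec (sel d T *\<^sub>v z)" "j \<notin> T"
  hence jd: "j < d" using sel_carrier[of d T] by simp
  have "(sel d T *\<^sub>v z) $ j = (\<Sum>p\<in>{0..<card T}. (if j = pick T p then 1 else 0) * z $ p)"
    using jd z unfolding sel_def by (simp add: scalar_prod_def)
  also have "\<dots> = 0" using j(2) pick_range[OF T] by (intro sum.neutral) auto
  finally show "(sel d T *\<^sub>v z) $ j = 0" .
qed

lemma dim_row_cols_sub: "dim_row (cols_sub B T) = dim_row B"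
proof -
  have "{i. i < dim_row B \<and> i \<in> {0..<dim_row B}} = {0..<dim_row B}" by auto
  thus ?thesis unfolding cols_sub_def by (simp add: dim_submatrix)
qed

lemma Qproj_carrier: "Qproj B T \<in> carrier_mat (dim_row B) (dim_row B)"
proof -
  define Mt where "Mt = cols_sub B T"
  have pen: "penrose Mt (pinv Mt)" by (rule pinv_penrose')
  have "Mt * pinv Mt \<in> carrier_mat (dim_row B) (dim_row B)" using pen dim_row_cols_sub[of B T]
    unfolding penrose_def Mt_def by (intro carrier_matI) auto
  thus ?thesis unfolding Qproj_def Mt_def by (rule minus_carrier_mat)
qed

lemma Qproj_isproj: assumes B: "B \<in> carrier_mat n d" and T: "T \<subseteq> {0..<d}"
  shows "isproj B T (Qproj B T)"
proof -
  define Mt where "Mt = cols_sub B T"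
  define X where "X = pinv Mt"
  have Mtc: "Mt \<in> carrier_mat n (card T)" unfolding Mt_def by (rule cols_sub_carrier[OF B T])
  have pen: "penrose Mt X" unfolding X_def by (rule pinv_penrose')
  have Xc: "X \<in> carrier_mat (card T) n" using pen Mtc unfolding penrose_def by auto
  have MXM: "Mt * X * Mt = Mt" and s1: "transpose_mat (Mt * X) = Mt * X" using pen unfolding penrose_def by auto
  have Q: "Qproj B T = 1\<^sub>m n - Mt * X" unfolding Qproj_def Mt_def X_def using B by simp
  have MtX: "Mt * X \<in> carrier_mat n n" using Mtc Xc by simp
  have Qc: "Qproj B T \<in> carrier_mat n n" unfolding Q using MtX by (rule minus_carrier_mat)
  have Mtt: "transpose_mat Mt \<in> carrier_mat (card T) n" using Mtc by simp
  have key: "transpose_mat Mt * (Mt * X) = transpose_mat Mt"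
  proof -
    have "transpose_mat Mt * (Mt * X) = transpose_mat Mt * transpose_mat (Mt * X)" using s1 by simp
    also have "\<dots> = transpose_mat ((Mt * X) * Mt)" by (rule transpose_mult[OF MtX Mtc, symmetric])
    finally show ?thesis using MXM by simp
  qed
  have MtQ: "transpose_mat Mt * Qproj B T = 0\<^sub>m (card T) n"
  proof -
    have "transpose_mat Mt * Qproj B T = transpose_mat Mt * 1\<^sub>m n - transpose_mat Mt * (Mt * X)"
      unfolding Q by (rule mult_minus_distrib_mat[OF Mtt one_carrier_mat MtX])
    also have "\<dots> = 0\<^sub>m (card T) n" unfolding key using Mtt by (intro eq_matI) auto
    finally show ?thesis .
  qed
  show ?thesis unfolding isproj_def
  proof (intro conjI ballI impI)
    show "Qproj B T \<in> carrier_mat (dim_row B) (dim_row B)" by (rule Qproj_carrier)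
  next
    fix v :: "real vec" and j assume "v \<in> carrier_vec (dim_row B)" and j: "j \<in> T" "j < dim_col B"
    hence v: "v \<in> carrier_vec n" using B by simp
      define p where "p = card {a\<in>T. a < j}"
      have pj: "pick T p = j" using pick_card_in_set[OF j(1)] p_def by simp
      have fT: "finite T" using T finite_subset by blast
      have "{a\<in>T. a < j} \<subset> T" using j(1) by auto
      hence pc: "p < card T" unfolding p_def using fT by (simp add: psubset_card_mono)
      have cj: "col B j = col Mt p" unfolding Mt_def using col_cols_sub[OF B T pc] pj by simp
      have "col Mt p \<bullet> (Qproj B T *\<^sub>v v) = (transpose_mat Mt *\<^sub>v (Qproj B T *\<^sub>v v)) $ p"
        using Mtc pc by simp
      also have "\<dots> = ((transpose_mat Mt * Qproj B T) *\<^sub>v v) $ p"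
        using assoc_mult_mat_vec[OF Mtt Qc v] by simp
      also have "\<dots> = 0" unfolding MtQ using pc v by simp
      finally show "col B j \<bullet> (Qproj B T *\<^sub>v v) = 0" using cj by simp
  next
    fix v :: "real vec" assume "v \<in> carrier_vec (dim_row B)"
    hence v: "v \<in> carrier_vec n" using B by simp
    show "\<exists>y\<in>carrier_vec (dim_col B). supp_in y T \<and> v - Qproj B T *\<^sub>v v = B *\<^sub>v y"
    proof (intro bexI conjI)
      show "supp_in (sel d T *\<^sub>v (X *\<^sub>v v)) T" by (rule sel_supp[OF T], insert Xc v, simp)
      show "sel d T *\<^sub>v (X *\<^sub>v v) \<in> carrier_vec (dim_col B)" using B sel_carrier[of d T]
        by (intro carrier_vecI) auto
      have "v - Qproj B T *\<^sub>v v = (Mt * X) *\<^sub>v v" unfolding Q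
        using minus_mult_distrib_mat_vec[OF one_carrier_mat MtX v] v MtX by (intro eq_vecI) auto
      also have "\<dots> = Mt *\<^sub>v (X *\<^sub>v v)" using assoc_mult_mat_vec[OF Mtc Xc v] .
      also have "\<dots> = (B * sel d T) *\<^sub>v (X *\<^sub>v v)" unfolding Mt_def cols_sub_sel[OF B T] ..
      also have "\<dots> = B *\<^sub>v (sel d T *\<^sub>v (X *\<^sub>v v))"
        using assoc_mult_mat_vec[OF B sel_carrier, of "X *\<^sub>v v"] Xc v by simp
      finally show "v - Qproj B T *\<^sub>v v = B *\<^sub>v (sel d T *\<^sub>v (X *\<^sub>v v))" .
    qed
  qed
qed

lemma Qproj_sym: "transpose_mat (Qproj B T) = Qproj B T"
proof -
  define Mt where "Mt = cols_sub B T"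
  define X where "X = pinv Mt"
  have pen: "penrose Mt X" unfolding X_def by (rule pinv_penrose')
  have s1: "transpose_mat (Mt * X) = Mt * X" using pen unfolding penrose_def by auto
  have dr: "dim_row Mt = dim_row B" unfolding Mt_def cols_sub_def by (simp add: dim_submatrix)
  have MtX: "Mt * X \<in> carrier_mat (dim_row B) (dim_row B)" using pen dr unfolding penrose_def
    by (intro carrier_matI) auto
  have Q: "Qproj B T = 1\<^sub>m (dim_row B) - Mt * X" unfolding Qproj_def Mt_def X_def by simp
  show ?thesis unfolding Q using transpose_minus[OF one_carrier_mat MtX] s1 by simp
qed


lemma isproj_prod: assumes B: "B \<in> carrier_mat n d" and Q: "isproj B X Q" and Q': "isproj (Q * B) Y Q'"
  shows "isproj B (X \<union> Y) (Q' * Q)"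
proof -
  have Qc: "Q \<in> carrier_mat n n" by (rule isprojD(1)[OF Q B])
  have QB: "Q * B \<in> carrier_mat n d" using Qc B by simp
  have Q'c: "Q' \<in> carrier_mat n n" by (rule isprojD(1)[OF Q' QB])
  have orthX: "col B j \<bullet> (Q' *\<^sub>v (Q *\<^sub>v v)) = 0" if v: "v \<in> carrier_vec n" and j: "j \<in> X" "j < d" for v j
  proof -
    have a: "Q *\<^sub>v v \<in> carrier_vec n" using Qc v by simp
    obtain y2 where y2: "y2 \<in> carrier_vec d" "supp_in y2 Y" "Q *\<^sub>v v - Q' *\<^sub>v (Q *\<^sub>v v) = (Q * B) *\<^sub>v y2"
      using isprojD(3)[OF Q' QB a] by blast
    define s where "s = B *\<^sub>v y2"
    have sc: "s \<in> carrier_vec n" unfolding s_def using B y2 by simp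
    have "(Q * B) *\<^sub>v y2 = Q *\<^sub>v s" unfolding s_def using assoc_mult_mat_vec[OF Qc B y2(1)] .
    hence y2': "Q *\<^sub>v v - Q' *\<^sub>v (Q *\<^sub>v v) = Q *\<^sub>v s" using y2(3) by simp
    have b: "Q' *\<^sub>v (Q *\<^sub>v v) = Q *\<^sub>v v - Q *\<^sub>v s"
    proof (rule eq_vecI)
      fix i assume "i < dim_vec (Q *\<^sub>v v - Q *\<^sub>v s)"
      hence i: "i < n" using Qc by simp
      have "(Q *\<^sub>v v)$i - (Q' *\<^sub>v (Q *\<^sub>v v))$i = (Q *\<^sub>v s)$i" using vec_entry[OF y2', of i] i v Qc Q'c by simp
      thus "(Q' *\<^sub>v (Q *\<^sub>v v)) $ i = (Q *\<^sub>v v - Q *\<^sub>v s) $ i" using i Qc by simp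
    qed (use Qc Q'c in simp)
    have cc: "col B j \<in> carrier_vec n" using B by (rule col_carrier_n)
    have "col B j \<bullet> (Q' *\<^sub>v (Q *\<^sub>v v)) = col B j \<bullet> (Q *\<^sub>v v) - col B j \<bullet> (Q *\<^sub>v s)"
      unfolding b by (rule scalar_prod_minus_distrib[of _ n], insert cc Qc v sc, auto)
    also have "\<dots> = 0" using isprojD(2)[OF Q B v j] isprojD(2)[OF Q B sc j] by simp
    finally show ?thesis .
  qed
  show ?thesis unfolding isproj_def
  proof (intro conjI ballI impI)
    show "Q' * Q \<in> carrier_mat (dim_row B) (dim_row B)" using Q'c Qc B by simp
  next
    fix v :: "real vec" and j assume "v \<in> carrier_vec (dim_row B)" and j: "j \<in> X \<union> Y" "j < dim_col B"
    hence v: "v \<in> carrier_vec n" and jd: "j < d" using B by auto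
    have e: "(Q' * Q) *\<^sub>v v = Q' *\<^sub>v (Q *\<^sub>v v)" using assoc_mult_mat_vec[OF Q'c Qc v] .
    show "col B j \<bullet> ((Q' * Q) *\<^sub>v v) = 0"
    proof (cases "j \<in> X")
      case True thus ?thesis unfolding e using orthX[OF v True jd] by simp
    next
      case False hence jY: "j \<in> Y" using j by simp
      define cb where "cb = col B j"
      have cbc: "cb \<in> carrier_vec n" unfolding cb_def using B by (rule col_carrier_n)
      have bc: "Q' *\<^sub>v (Q *\<^sub>v v) \<in> carrier_vec n" using Q'c Qc v by simp
      obtain y4 where y4: "y4 \<in> carrier_vec d" "supp_in y4 X" "cb - Q *\<^sub>v cb = B *\<^sub>v y4"
        using isprojD(3)[OF Q B cbc] by blast
      have cbs: "cb = Q *\<^sub>v cb + B *\<^sub>v y4"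
      proof (rule eq_vecI)
        fix i assume "i < dim_vec (Q *\<^sub>v cb + B *\<^sub>v y4)"
        hence i: "i < n" using B by simp
        have "cb$i - (Q *\<^sub>v cb)$i = (B *\<^sub>v y4)$i" using vec_entry[OF y4(3), of i] i cbc Qc by simp
        thus "cb $ i = (Q *\<^sub>v cb + B *\<^sub>v y4) $ i" using i Qc B by simp
      qed (use cbc Qc B in simp)
      have colQB: "col (Q * B) j = Q *\<^sub>v cb" unfolding cb_def using col_mult2[OF Qc B jd] .
      have o1: "(Q *\<^sub>v cb) \<bullet> (Q' *\<^sub>v (Q *\<^sub>v v)) = 0"
        using isprojD(2)[OF Q' QB _ jY jd, of "Q *\<^sub>v v"] Qc v colQB by simp
      have o2: "(B *\<^sub>v y4) \<bullet> (Q' *\<^sub>v (Q *\<^sub>v v)) = 0"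
        by (rule supp_orth[OF B y4(1) y4(2) bc], rule orthX[OF v])
      have "cb \<bullet> (Q' *\<^sub>v (Q *\<^sub>v v)) = (Q *\<^sub>v cb) \<bullet> (Q' *\<^sub>v (Q *\<^sub>v v)) + (B *\<^sub>v y4) \<bullet> (Q' *\<^sub>v (Q *\<^sub>v v))"
        by (subst cbs, rule add_scalar_prod_distrib[of _ n], insert Qc cbc B y4(1) bc, auto)
      thus ?thesis unfolding e cb_def[symmetric] using o1 o2 by simp
    qed
  next
    fix v :: "real vec" assume "v \<in> carrier_vec (dim_row B)"
    hence v: "v \<in> carrier_vec n" using B by simp
    have e: "(Q' * Q) *\<^sub>v v = Q' *\<^sub>v (Q *\<^sub>v v)" using assoc_mult_mat_vec[OF Q'c Qc v] .
    have a: "Q *\<^sub>v v \<in> carrier_vec n" using Qc v by simp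
    obtain y1 where y1: "y1 \<in> carrier_vec d" "supp_in y1 X" "v - Q *\<^sub>v v = B *\<^sub>v y1"
      using isprojD(3)[OF Q B v] by blast
    obtain y2 where y2: "y2 \<in> carrier_vec d" "supp_in y2 Y" "Q *\<^sub>v v - Q' *\<^sub>v (Q *\<^sub>v v) = (Q * B) *\<^sub>v y2"
      using isprojD(3)[OF Q' QB a] by blast
    define s where "s = B *\<^sub>v y2"
    have sc: "s \<in> carrier_vec n" unfolding s_def using B y2 by simp
    obtain y3 where y3: "y3 \<in> carrier_vec d" "supp_in y3 X" "s - Q *\<^sub>v s = B *\<^sub>v y3"
      using isprojD(3)[OF Q B sc] by blast
    have "(Q * B) *\<^sub>v y2 = Q *\<^sub>v s" unfolding s_def using assoc_mult_mat_vec[OF Qc B y2(1)] .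
    hence y2': "Q *\<^sub>v v - Q' *\<^sub>v (Q *\<^sub>v v) = Q *\<^sub>v s" using y2(3) by simp
    have By: "B *\<^sub>v (y1 + y2 - y3) = B *\<^sub>v y1 + B *\<^sub>v y2 - B *\<^sub>v y3"
    proof -
      have "B *\<^sub>v (y1 + y2 - y3) = B *\<^sub>v (y1 + y2) - B *\<^sub>v y3"
        by (rule mult_minus_distrib_mat_vec[OF B], insert y1 y2 y3, auto)
      also have "B *\<^sub>v (y1 + y2) = B *\<^sub>v y1 + B *\<^sub>v y2"
        by (rule mult_add_distrib_mat_vec[OF B y1(1) y2(1)])
      finally show ?thesis .
    qed
    show "\<exists>y\<in>carrier_vec (dim_col B). supp_in y (X \<union> Y) \<and> v - (Q' * Q) *\<^sub>v v = B *\<^sub>v y"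
    proof (intro bexI conjI)
      show "y1 + y2 - y3 \<in> carrier_vec (dim_col B)" using y1 y2 y3 B by simp
      show "supp_in (y1 + y2 - y3) (X \<union> Y)" using y1 y2 y3 unfolding supp_in_def by auto
      show "v - (Q' * Q) *\<^sub>v v = B *\<^sub>v (y1 + y2 - y3)" unfolding By e
      proof (rule eq_vecI)
        fix i assume "i < dim_vec (B *\<^sub>v y1 + B *\<^sub>v y2 - B *\<^sub>v y3)"
        hence i: "i < n" using B by simp
        have f1: "v$i - (Q *\<^sub>v v)$i = (B *\<^sub>v y1)$i" using vec_entry[OF y1(3), of i] i v Qc by simp
        have f2: "(Q *\<^sub>v v)$i - (Q' *\<^sub>v (Q *\<^sub>v v))$i = (Q *\<^sub>v s)$i" using vec_entry[OF y2', of i] i v Qc Q'c by simp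
        have f3: "s$i - (Q *\<^sub>v s)$i = (B *\<^sub>v y3)$i" using vec_entry[OF y3(3), of i] i sc Qc by simp
        show "(v - Q' *\<^sub>v (Q *\<^sub>v v)) $ i = (B *\<^sub>v y1 + B *\<^sub>v y2 - B *\<^sub>v y3) $ i"
          using f1 f2 f3 i v Qc Q'c B unfolding s_def by simp
      qed (use v Q'c Qc B in simp)
    qed
  qed
qed

definition r1proj :: "real vec \<Rightarrow> real mat" where
  "r1proj u = 1\<^sub>m (dim_vec u) - (1 / (u \<bullet> u)) \<cdot>\<^sub>m mat (dim_vec u) (dim_vec u) (\<lambda>(a,b). u$a * u$b)"

lemma r1proj_carrier: "u \<in> carrier_vec n \<Longrightarrow> r1proj u \<in> carrier_mat n n"
  unfolding r1proj_def by (intro minus_carrier_mat) auto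

lemma r1proj_mv: assumes u: "u \<in> carrier_vec n" and x: "x \<in> carrier_vec n"
  shows "r1proj u *\<^sub>v x = x - ((u \<bullet> x)/(u \<bullet> u)) \<cdot>\<^sub>v u"
proof (rule eq_vecI)
  fix i assume "i < dim_vec (x - ((u \<bullet> x)/(u \<bullet> u)) \<cdot>\<^sub>v u)"
  hence i: "i < n" using x u by simp
  have "(r1proj u *\<^sub>v x) $ i = (\<Sum>j\<in>{0..<n}. ((if i = j then 1 else 0) - (1/(u \<bullet> u)) * (u$i * u$j)) * x$j)"
    using i u x unfolding r1proj_def by (simp add: scalar_prod_def)
  also have "\<dots> = (\<Sum>j\<in>{0..<n}. (if i = j then 1 else 0) * x$j) - (\<Sum>j\<in>{0..<n}. (1/(u \<bullet> u)) * u$i * (u$j * x$j))"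
    by (simp only: left_diff_distrib sum_subtractf mult.assoc)
  also have "(\<Sum>j\<in>{0..<n}. (if i = j then 1 else 0) * x$j) = (\<Sum>j\<in>{0..<n}. (if i = j then x$j else 0))"
    by (intro sum.cong) auto
  also have "(\<Sum>j\<in>{0..<n}. (1/(u \<bullet> u)) * u$i * (u$j * x$j)) = (1/(u \<bullet> u)) * u$i * (\<Sum>j\<in>{0..<n}. u$j * x$j)"
    by (simp only: sum_distrib_left)
  also have "(\<Sum>j\<in>{0..<n}. (if i = j then x$j else 0)) = x$i" using i by simp
  also have "(\<Sum>j\<in>{0..<n}. u$j * x$j) = u \<bullet> x" using x by (simp add: scalar_prod_def)
  also have "x$i - (1/(u \<bullet> u)) * u$i * (u \<bullet> x) = (x - ((u \<bullet> x)/(u \<bullet> u)) \<cdot>\<^sub>v u) $ i"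
    using i u x by simp
  finally show "(r1proj u *\<^sub>v x) $ i = (x - ((u \<bullet> x)/(u \<bullet> u)) \<cdot>\<^sub>v u) $ i" .
qed (use r1proj_carrier[OF u] u x in auto)

lemma r1proj_isproj: assumes B: "B \<in> carrier_mat n d" and i: "i < d" and u0: "col B i \<noteq> 0\<^sub>v n"
  shows "isproj B {i} (r1proj (col B i))"
proof -
  define u where "u = col B i"
  have uc: "u \<in> carrier_vec n" unfolding u_def using B by (rule col_carrier_n)
  have uu: "u \<bullet> u \<noteq> 0" using dot_self_zero[OF uc] u0 unfolding u_def by auto
  show ?thesis unfolding isproj_def u_def[symmetric]
  proof (intro conjI ballI impI)
    show "r1proj u \<in> carrier_mat (dim_row B) (dim_row B)" using r1proj_carrier[OF uc] B by simp
  next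
    fix v :: "real vec" and j assume "v \<in> carrier_vec (dim_row B)" and j: "j \<in> {i}" "j < dim_col B"
    hence v: "v \<in> carrier_vec n" and ji: "j = i" using B by auto
    have "u \<bullet> (r1proj u *\<^sub>v v) = u \<bullet> v - ((u \<bullet> v)/(u \<bullet> u)) * (u \<bullet> u)"
      unfolding r1proj_mv[OF uc v] by (subst scalar_prod_minus_distrib[of _ n], insert uc v, auto)
    also have "\<dots> = 0" using uu by simp
    finally show "col B j \<bullet> (r1proj u *\<^sub>v v) = 0" unfolding ji u_def[symmetric] .
  next
    fix v :: "real vec" assume "v \<in> carrier_vec (dim_row B)"
    hence v: "v \<in> carrier_vec n" using B by simp
    define a where "a = (u \<bullet> v)/(u \<bullet> u)"
    show "\<exists>y\<in>carrier_vec (dim_col B). supp_in y {i} \<and> v - r1proj u *\<^sub>v v = B *\<^sub>v y"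
    proof (intro bexI conjI)
      show "a \<cdot>\<^sub>v unit_vec d i \<in> carrier_vec (dim_col B)" using B by simp
      show "supp_in (a \<cdot>\<^sub>v unit_vec d i) {i}" unfolding supp_in_def unit_vec_def by auto
      have "B *\<^sub>v (a \<cdot>\<^sub>v unit_vec d i) = a \<cdot>\<^sub>v u"
        unfolding mult_mat_vec[OF B unit_vec_carrier] mult_unit_col[OF B i] u_def ..
      thus "v - r1proj u *\<^sub>v v = B *\<^sub>v (a \<cdot>\<^sub>v unit_vec d i)"
        unfolding r1proj_mv[OF uc v] a_def[symmetric] using v uc by (intro eq_vecI) auto
    qed
  qed
qed

lemma Qproj_comp: assumes B: "B \<in> carrier_mat n d" and S: "S \<subseteq> {0..<d}" and T: "T \<subseteq> {0..<d}"
  shows "Qproj (Qproj B S * B) T * Qproj B S = Qproj B (S \<union> T)"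
proof -
  have Qc: "Qproj B S \<in> carrier_mat n n" using Qproj_carrier[of B S] B by simp
  have QB: "Qproj B S * B \<in> carrier_mat n d" using Qc B by simp
  show ?thesis
    by (rule isproj_unique[OF B isproj_prod[OF B Qproj_isproj[OF B S] Qproj_isproj[OF QB T]]
        Qproj_isproj[OF B]], insert S T, auto)
qed

lemma Qproj_step: assumes B: "B \<in> carrier_mat n d" and S: "S \<subseteq> {0..<d}" and i: "i < d"
  and u0: "Qproj B S *\<^sub>v col B i \<noteq> 0\<^sub>v n"
  shows "Qproj B (S \<union> {i}) = r1proj (Qproj B S *\<^sub>v col B i) * Qproj B S"
proof -
  have Qc: "Qproj B S \<in> carrier_mat n n" using Qproj_carrier[of B S] B by simp
  have QB: "Qproj B S * B \<in> carrier_mat n d" using Qc B by simp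
  have cQB: "col (Qproj B S * B) i = Qproj B S *\<^sub>v col B i" using col_mult2[OF Qc B i] .
  have "Qproj (Qproj B S * B) {i} = r1proj (Qproj B S *\<^sub>v col B i)"
    using isproj_unique[OF QB Qproj_isproj[OF QB] r1proj_isproj[OF QB i]] i u0 cQB by auto
  thus ?thesis using Qproj_comp[OF B S, of "{i}"] i by simp
qed

lemma Qproj_step_col: assumes B: "B \<in> carrier_mat n d" and S: "S \<subseteq> {0..<d}" and i: "i < d"
  and u0: "Qproj B S *\<^sub>v col B i \<noteq> 0\<^sub>v n" and j: "j < d"
  shows "Qproj B (S \<union> {i}) *\<^sub>v col B j = Qproj B S *\<^sub>v col B j
     - (((Qproj B S *\<^sub>v col B i) \<bullet> (Qproj B S *\<^sub>v col B j)) / ((Qproj B S *\<^sub>v col B i) \<bullet> (Qproj B S *\<^sub>v col B i)))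
       \<cdot>\<^sub>v (Qproj B S *\<^sub>v col B i)"
proof -
  have Qc: "Qproj B S \<in> carrier_mat n n" using Qproj_carrier[of B S] B by simp
  have cj: "col B j \<in> carrier_vec n" using B by (rule col_carrier_n)
  have uc: "Qproj B S *\<^sub>v col B i \<in> carrier_vec n" using Qc B by (simp add: col_carrier_n)
  show ?thesis unfolding Qproj_step[OF B S i u0]
    using assoc_mult_mat_vec[OF r1proj_carrier[OF uc] Qc cj] r1proj_mv[OF uc] Qc cj by simp
qed

definition gm :: "(nat \<Rightarrow> real vec) \<Rightarrow> nat \<Rightarrow> real" where
  "gm f m = det (mat m m (\<lambda>(p,q). f p \<bullet> f q))"

lemma gm_cong: "(\<And>q. q < m \<Longrightarrow> f q = f' q) \<Longrightarrow> gm f m = gm f' m"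
  unfolding gm_def by (intro arg_cong[where f = det] eq_matI) auto

lemma gram_cols: assumes B: "B \<in> carrier_mat n d" and T: "T \<subseteq> {0..<d}"
  shows "det (transpose_mat (cols_sub B T) * cols_sub B T) = gm (\<lambda>p. col B (pick T p)) (card T)"
  unfolding gm_def
proof (intro arg_cong[where f = det] eq_matI)
  have Mc: "cols_sub B T \<in> carrier_mat n (card T)" by (rule cols_sub_carrier[OF B T])
  fix p q assume "p < dim_row (mat (card T) (card T) (\<lambda>(p, q). col B (pick T p) \<bullet> col B (pick T q)))"
    "q < dim_col (mat (card T) (card T) (\<lambda>(p, q). col B (pick T p) \<bullet> col B (pick T q)))"
  hence pq: "p < card T" "q < card T" by auto
  show "(transpose_mat (cols_sub B T) * cols_sub B T) $$ (p, q) =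
        mat (card T) (card T) (\<lambda>(p, q). col B (pick T p) \<bullet> col B (pick T q)) $$ (p, q)"
    using Mc pq col_cols_sub[OF B T] by simp
qed (use cols_sub_carrier[OF B T] in auto)

lemma gm_zero: assumes f: "\<And>q. q < m \<Longrightarrow> f q \<in> carrier_vec n" and p: "p < m" and fp: "f p = 0\<^sub>v n"
  shows "gm f m = 0"
proof -
  define G where "G = mat m m (\<lambda>(p,q). f p \<bullet> f q)"
  have Gc: "G \<in> carrier_mat m m" unfolding G_def by simp
  have "det G = (\<Sum>j<m. G $$ (p,j) * cofactor G p j)" by (rule laplace_expansion_row[OF Gc p])
  also have "\<dots> = 0" using p f fp unfolding G_def by (intro sum.neutral) auto
  finally show ?thesis unfolding gm_def G_def .
qed

lemma det_E_one: assumes p: "p < m" and cp: "c p = 0"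
  shows "det (mat m m (\<lambda>(s,q). (if s = q then 1 else 0) - (if s = p then c q else 0)) :: real mat) = 1"
proof -
  define E :: "real mat" where "E = mat m m (\<lambda>(s,q). (if s = q then 1 else 0) - (if s = p then c q else 0))"
  have Ec: "E \<in> carrier_mat m m" unfolding E_def by simp
  have "det E = (\<Sum>s<m. E $$ (s,p) * cofactor E s p)" by (rule laplace_expansion_column[OF Ec p])
  also have "\<dots> = (\<Sum>s<m. if s = p then cofactor E p p else 0)"
    using p cp unfolding E_def by (intro sum.cong) auto
  also have "\<dots> = cofactor E p p" using p by simp
  also have "\<dots> = det (mat_delete E p p)" unfolding cofactor_def by simp
  also have "mat_delete E p p = 1\<^sub>m (m - 1)"
    unfolding mat_delete_def E_def by (intro eq_matI) auto
  finally show ?thesis unfolding E_def by simp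
qed

lemma gm_step: assumes f: "\<And>q. q < m \<Longrightarrow> f q \<in> carrier_vec n" and p: "p < m"
  and u0: "f p \<noteq> 0\<^sub>v n"
  shows "gm f m = (f p \<bullet> f p) * gm (\<lambda>q. f (if q < p then q else Suc q) -
      ((f p \<bullet> f (if q < p then q else Suc q)) / (f p \<bullet> f p)) \<cdot>\<^sub>v f p) (m - 1)"
proof -
  define u where "u = f p"
  have uc: "u \<in> carrier_vec n" unfolding u_def using f p by simp
  have uu: "u \<bullet> u \<noteq> 0" using dot_self_zero[OF uc] u0 unfolding u_def by auto
  define c where "c q = (if q = p then 0 else (u \<bullet> f q)/(u \<bullet> u))" for q
  define h where "h q = f q - c q \<cdot>\<^sub>v u" for q
  have hc: "h q \<in> carrier_vec n" if "q < m" for q unfolding h_def using f[OF that] uc by simp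
  have hp: "h p = u" unfolding h_def c_def u_def using f p by (intro eq_vecI) auto
  define V :: "real mat" where "V = mat n m (\<lambda>(r,q). f q $ r)"
  define E :: "real mat" where "E = mat m m (\<lambda>(s,q). (if s = q then 1 else 0) - (if s = p then c q else 0))"
  define W :: "real mat" where "W = mat n m (\<lambda>(r,q). h q $ r)"
  define F :: "real mat" where "F = mat m m (\<lambda>(a,b). f a \<bullet> f b)"
  define H :: "real mat" where "H = mat m m (\<lambda>(a,b). h a \<bullet> h b)"
  have Vc: "V \<in> carrier_mat n m" unfolding V_def by simp
  have Ec: "E \<in> carrier_mat m m" unfolding E_def by simp
  have Wc: "W \<in> carrier_mat n m" unfolding W_def by simp
  have Fc: "F \<in> carrier_mat m m" unfolding F_def by simp
  have Hc: "H \<in> carrier_mat m m" unfolding H_def by simp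
  have colV: "col V q = f q" if "q < m" for q unfolding V_def using f[OF that] that by (intro eq_vecI) auto
  have colW: "col W q = h q" if "q < m" for q unfolding W_def using hc[OF that] that by (intro eq_vecI) auto
  have FV: "F = transpose_mat V * V"
    using Vc colV unfolding F_def by (intro eq_matI) auto
  have HW: "H = transpose_mat W * W"
    using Wc colW unfolding H_def by (intro eq_matI) auto
  have VE: "V * E = W"
  proof (rule eq_matI)
    fix r q assume "r < dim_row W" "q < dim_col W"
    hence rq: "r < n" "q < m" unfolding W_def by auto
    have "(V * E) $$ (r,q) = (\<Sum>s\<in>{0..<m}. f s $ r * ((if s = q then 1 else 0) - (if s = p then c q else 0)))"
      using rq unfolding V_def E_def by (simp add: scalar_prod_def)
    also have "\<dots> = (\<Sum>s\<in>{0..<m}. (if s = q then f s $ r else 0)) - (\<Sum>s\<in>{0..<m}. (if s = p then c q * f s $ r else 0))"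
      by (simp only: right_diff_distrib sum_subtractf) (intro arg_cong2[where f = "(-)"] sum.cong, auto)
    also have "\<dots> = f q $ r - c q * f p $ r" using rq p by simp
    also have "\<dots> = W $$ (r,q)" unfolding W_def h_def u_def using rq f[OF rq(2)] f[OF p] by simp
    finally show "(V * E) $$ (r,q) = W $$ (r,q)" .
  qed (use Vc Ec Wc in auto)
  have HEF: "H = transpose_mat E * F * E"
  proof -
    have "H = transpose_mat (V * E) * (V * E)" unfolding HW VE ..
    also have "transpose_mat (V * E) = transpose_mat E * transpose_mat V" by (rule transpose_mult[OF Vc Ec])
    also have "transpose_mat E * transpose_mat V * (V * E) = transpose_mat E * (transpose_mat V * V) * E"
    proof -
      have Et: "transpose_mat E \<in> carrier_mat m m" using Ec by simp
      have Vt: "transpose_mat V \<in> carrier_mat m n" using Vc by simp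
      have EVt: "transpose_mat E * transpose_mat V \<in> carrier_mat m n" using Et Vt by simp
      have "transpose_mat E * transpose_mat V * (V * E) = (transpose_mat E * transpose_mat V * V) * E"
        by (rule assoc_mult_mat[symmetric, OF EVt Vc Ec])
      also have "transpose_mat E * transpose_mat V * V = transpose_mat E * (transpose_mat V * V)"
        by (rule assoc_mult_mat[OF Et Vt Vc])
      finally show ?thesis .
    qed
    finally show ?thesis unfolding FV .
  qed
  have dE: "det E = 1" unfolding E_def by (rule det_E_one[OF p]) (simp add: c_def)
  have dH: "det H = det F"
  proof -
    have "det H = det (transpose_mat E * F) * det E" unfolding HEF
      by (rule det_mult[of _ m], insert Ec Fc, auto)
    also have "\<dots> = det (transpose_mat E) * det F * det E"
      by (subst det_mult[of _ m], insert Ec Fc, auto)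
    also have "\<dots> = det F" using dE det_transpose[OF Ec] by simp
    finally show ?thesis .
  qed
  have Hrow: "H $$ (p,q) = (if q = p then u \<bullet> u else 0)" if q: "q < m" for q
  proof (cases "q = p")
    case True thus ?thesis unfolding H_def using hp p by simp
  next
    case False
    have "H $$ (p,q) = u \<bullet> (f q - ((u \<bullet> f q)/(u \<bullet> u)) \<cdot>\<^sub>v u)"
      unfolding H_def using hp p q False unfolding h_def c_def by simp
    also have "\<dots> = u \<bullet> f q - ((u \<bullet> f q)/(u \<bullet> u)) * (u \<bullet> u)"
      by (subst scalar_prod_minus_distrib[of _ n], insert uc f[OF q], auto)
    also have "\<dots> = 0" using uu by simp
    finally show ?thesis using False by simp
  qed
  have "det H = (\<Sum>j<m. H $$ (p,j) * cofactor H p j)" by (rule laplace_expansion_row[OF Hc p])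
  also have "\<dots> = (\<Sum>j<m. if j = p then (u \<bullet> u) * cofactor H p p else 0)"
    using Hrow by (intro sum.cong) auto
  also have "\<dots> = (u \<bullet> u) * det (mat_delete H p p)" using p unfolding cofactor_def by simp
  also have "mat_delete H p p = mat (m - 1) (m - 1) (\<lambda>(a,b).
       (f (if a < p then a else Suc a) - ((u \<bullet> f (if a < p then a else Suc a)) / (u \<bullet> u)) \<cdot>\<^sub>v u) \<bullet>
       (f (if b < p then b else Suc b) - ((u \<bullet> f (if b < p then b else Suc b)) / (u \<bullet> u)) \<cdot>\<^sub>v u))"
    unfolding mat_delete_def H_def h_def c_def by (intro eq_matI) auto
  finally show ?thesis unfolding gm_def dH[symmetric] H_def[symmetric] F_def[symmetric] u_def by simp
qed

lemma pick_remove: assumes fT: "finite T" and p: "p < card T" and q: "q < card T - 1"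
  shows "pick (T - {pick T p}) q = pick T (if q < p then q else Suc q)"
proof -
  define i where "i = pick T p"
  define q' where "q' = (if q < p then q else Suc q)"
  define x where "x = pick T q'"
  have q'c: "q' < card T" unfolding q'_def using p q by auto
  have q'p: "q' \<noteq> p" unfolding q'_def by auto
  have xT: "x \<in> T" unfolding x_def using pick_in_set q'c by blast
  have iT: "i \<in> T" unfolding i_def using pick_in_set p by blast
  have xi: "x \<noteq> i"
  proof
    assume "x = i"
    thus False using q'p pick_mono[of q' T] pick_mono[of p T] p q'c unfolding x_def i_def
      by (metis nat_neq_iff order.irrefl)
  qed
  have cx: "card {a\<in>T. a < x} = q'" unfolding x_def using card_pick q'c by blast
  have "card {a\<in>T - {i}. a < x} = q"
  proof (cases "q < p")
    case True
    hence "x < i" unfolding x_def i_def q'_def using pick_mono p by auto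
    hence "{a\<in>T - {i}. a < x} = {a\<in>T. a < x}" by auto
    thus ?thesis using cx True unfolding q'_def by simp
  next
    case False
    hence "p < q'" unfolding q'_def by simp
    hence "i < x" unfolding x_def i_def using pick_mono[of q' T p] q'c by blast
    hence e: "{a\<in>T - {i}. a < x} = {a\<in>T. a < x} - {i}" by auto
    have "i \<in> {a\<in>T. a < x}" using \<open>i < x\<close> iT by simp
    hence "card ({a\<in>T. a < x} - {i}) = card {a\<in>T. a < x} - 1" using fT by (simp add: card_Diff_singleton)
    thus ?thesis using e cx False unfolding q'_def by simp
  qed
  hence "pick (T - {i}) q = x" using pick_card_in_set[of x "T - {i}"] xT xi by simp
  thus ?thesis unfolding x_def q'_def i_def .
qed

lemma gram_remove: assumes B': "B' \<in> carrier_mat n d" and B'': "B'' \<in> carrier_mat n d"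
  and T: "T \<subseteq> {0..<d}" and iT: "i \<in> T" and u0: "col B' i \<noteq> 0\<^sub>v n"
  and cB: "\<And>j. j < d \<Longrightarrow> col B'' j = col B' j - ((col B' i \<bullet> col B' j)/(col B' i \<bullet> col B' i)) \<cdot>\<^sub>v col B' i"
  shows "gm (\<lambda>p. col B' (pick T p)) (card T) =
     (col B' i \<bullet> col B' i) * gm (\<lambda>q. col B'' (pick (T - {i}) q)) (card (T - {i}))"
proof -
  have fT: "finite T" using T finite_subset by blast
  define p where "p = card {a\<in>T. a < i}"
  have pi: "pick T p = i" using pick_card_in_set[OF iT] p_def by simp
  have "{a\<in>T. a < i} \<subset> T" using iT by auto
  hence pc: "p < card T" unfolding p_def using fT by (simp add: psubset_card_mono)
  have f: "\<And>q. q < card T \<Longrightarrow> col B' (pick T q) \<in> carrier_vec n" using B' by (simp add: col_carrier_n)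
  have step: "gm (\<lambda>p. col B' (pick T p)) (card T) = (col B' i \<bullet> col B' i) *
      gm (\<lambda>q. col B' (pick T (if q < p then q else Suc q)) -
      ((col B' i \<bullet> col B' (pick T (if q < p then q else Suc q))) / (col B' i \<bullet> col B' i)) \<cdot>\<^sub>v col B' i) (card T - 1)"
    using gm_step[of "card T" "\<lambda>p. col B' (pick T p)" n p, OF f pc] u0 pi by simp
  have "gm (\<lambda>q. col B' (pick T (if q < p then q else Suc q)) -
      ((col B' i \<bullet> col B' (pick T (if q < p then q else Suc q))) / (col B' i \<bullet> col B' i)) \<cdot>\<^sub>v col B' i) (card T - 1)
    = gm (\<lambda>q. col B'' (pick (T - {i}) q)) (card T - 1)"
  proof (rule gm_cong)
    fix q assume q: "q < card T - 1"
    have "(if q < p then q else Suc q) < card T" using q pc by auto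
    hence "pick T (if q < p then q else Suc q) < d" using pick_range[OF T] by blast
    thus "col B' (pick T (if q < p then q else Suc q)) -
      ((col B' i \<bullet> col B' (pick T (if q < p then q else Suc q))) / (col B' i \<bullet> col B' i)) \<cdot>\<^sub>v col B' i
      = col B'' (pick (T - {i}) q)"
      using cB pick_remove[OF fT pc q] pi by simp
  qed
  moreover have "card (T - {i}) = card T - 1" using iT fT by simp
  ultimately show ?thesis using step by simp
qed

lemma smult_sum_right: "Polynomial.smult c (sum f A) = (\<Sum>x\<in>A. Polynomial.smult c (f x))"
  by (induct A rule: infinite_finite_induct) (auto simp: smult_add_right)

lemma smult_card: "Polynomial.smult (real (card T)) p = (\<Sum>i\<in>T. p)"
proof -
  have "Polynomial.smult (\<Sum>i\<in>T. 1) p = (\<Sum>i\<in>T. Polynomial.smult 1 p)" by (rule smult_sum)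
  thus ?thesis by simp
qed

lemma comb:
  fixes F :: "real mat \<Rightarrow> real poly"
  assumes B: "B \<in> carrier_mat n d" and S: "S \<subseteq> {0..<d}" and m: "1 \<le> m"
  shows "(\<Sum>T | T \<subseteq> {0..<d} \<and> card T = m.
      Polynomial.smult (gm (\<lambda>p. col (Qproj B S * B) (pick T p)) (card T)) (F (Qproj (Qproj B S * B) T * Qproj B S)))
   = Polynomial.smult (1 / real m) (\<Sum>i | i \<in> {0..<d} \<and> Qproj B S *\<^sub>v col B i \<noteq> 0\<^sub>v n.
        Polynomial.smult ((Qproj B S *\<^sub>v col B i) \<bullet> (Qproj B S *\<^sub>v col B i))
          (\<Sum>T | T \<subseteq> {0..<d} \<and> card T = m - 1.
             Polynomial.smult (gm (\<lambda>p. col (Qproj B (S \<union> {i}) * B) (pick T p)) (card T))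
               (F (Qproj (Qproj B (S \<union> {i}) * B) T * Qproj B (S \<union> {i})))))"
proof -
  define Q where "Q = Qproj B S"
  define u where "u i = Q *\<^sub>v col B i" for i
  define Qi where "Qi i = Qproj B (S \<union> {i})" for i
  define g where "g T = Polynomial.smult (gm (\<lambda>p. col (Q * B) (pick T p)) (card T)) (F (Qproj (Q * B) T * Q))" for T
  define h where "h i T = Polynomial.smult (gm (\<lambda>p. col (Qi i * B) (pick T p)) (card T)) (F (Qproj (Qi i * B) T * Qi i))" for i T
  define TT where "TT k = {T. T \<subseteq> {0..<d} \<and> card T = k}" for k
  define I where "I = {i. i \<in> {0..<d} \<and> u i \<noteq> 0\<^sub>v n}"
  have Qc: "Q \<in> carrier_mat n n" unfolding Q_def using Qproj_carrier[of B S] B by simp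
  have QB: "Q * B \<in> carrier_mat n d" using Qc B by simp
  have Qic: "Qi i \<in> carrier_mat n n" for i unfolding Qi_def using Qproj_carrier[of B "S \<union> {i}"] B by simp
  have QiB: "Qi i * B \<in> carrier_mat n d" for i using mult_carrier_mat[OF Qic B] .
  have colQB: "col (Q * B) j = u j" if "j < d" for j unfolding u_def using col_mult2[OF Qc B that] .
  have uc: "u j \<in> carrier_vec n" for j unfolding u_def using Qc B by (simp add: col_carrier_n)
  have finTT: "finite (TT k)" for k
  proof -
    have "TT k \<subseteq> Pow {0..<d}" unfolding TT_def by auto
    thus ?thesis by (rule finite_subset) simp
  qed
  have finI: "finite I" unfolding I_def by simp
  have fT: "finite T" if "T \<in> TT k" for T k using that unfolding TT_def by (auto intro: finite_subset)
  have F1: "g T = 0" if T: "T \<in> TT m" and iT: "i \<in> T" and ui: "u i = 0\<^sub>v n" for T i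
  proof -
    have Td: "T \<subseteq> {0..<d}" using T unfolding TT_def by simp
    define p where "p = card {a\<in>T. a < i}"
    have pi: "pick T p = i" using pick_card_in_set[OF iT] p_def by simp
    have "{a\<in>T. a < i} \<subset> T" using iT by auto
    hence pc: "p < card T" unfolding p_def using fT[OF T] by (simp add: psubset_card_mono)
    have "gm (\<lambda>p. col (Q * B) (pick T p)) (card T) = 0"
    proof (rule gm_zero[OF _ pc])
      show "\<And>q. q < card T \<Longrightarrow> col (Q * B) (pick T q) \<in> carrier_vec n" using QB by (simp add: col_carrier_n)
      show "col (Q * B) (pick T p) = 0\<^sub>v n" using pi colQB ui Td iT by auto
    qed
    thus ?thesis unfolding g_def by simp
  qed
  have colQi: "col (Qi i * B) j = u j - ((u i \<bullet> u j) / (u i \<bullet> u i)) \<cdot>\<^sub>v u i"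
    if i: "i \<in> I" and j: "j < d" for i j
  proof -
    have "col (Qi i * B) j = Qi i *\<^sub>v col B j" using col_mult2[OF Qic B j] .
    also have "\<dots> = u j - ((u i \<bullet> u j) / (u i \<bullet> u i)) \<cdot>\<^sub>v u i"
      unfolding Qi_def u_def Q_def by (rule Qproj_step_col[OF B S _ _ j], insert i, auto simp: I_def u_def Q_def)
    finally show ?thesis .
  qed
  have F2: "h i T = 0" if i: "i \<in> I" and T: "T \<in> TT (m - 1)" and iT: "i \<in> T" for i T
  proof -
    have Td: "T \<subseteq> {0..<d}" using T unfolding TT_def by simp
    have id: "i < d" using i unfolding I_def by simp
    have uu: "u i \<bullet> u i \<noteq> 0" using i dot_self_zero[OF uc] unfolding I_def by auto
    define p where "p = card {a\<in>T. a < i}"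
    have pi: "pick T p = i" using pick_card_in_set[OF iT] p_def by simp
    have "{a\<in>T. a < i} \<subset> T" using iT by auto
    hence pc: "p < card T" unfolding p_def using fT[OF T] by (simp add: psubset_card_mono)
    have "gm (\<lambda>p. col (Qi i * B) (pick T p)) (card T) = 0"
    proof (rule gm_zero[OF _ pc])
      show "\<And>q. q < card T \<Longrightarrow> col (Qi i * B) (pick T q) \<in> carrier_vec n" using col_carrier_n[OF QiB] by blast
      show "col (Qi i * B) (pick T p) = 0\<^sub>v n" unfolding pi colQi[OF i id] using uu uc[of i]
        by (intro eq_vecI) auto
    qed
    thus ?thesis unfolding h_def by simp
  qed
  have F3: "g (insert i T) = Polynomial.smult (u i \<bullet> u i) (h i T)"
    if i: "i \<in> I" and T: "T \<in> TT (m - 1)" and iT: "i \<notin> T" for i T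
  proof -
    have Td: "T \<subseteq> {0..<d}" using T unfolding TT_def by simp
    have id: "i < d" using i unfolding I_def by simp
    have iTd: "insert i T \<subseteq> {0..<d}" using Td id by auto
    have gr: "gm (\<lambda>p. col (Q * B) (pick (insert i T) p)) (card (insert i T)) =
        (col (Q * B) i \<bullet> col (Q * B) i) * gm (\<lambda>q. col (Qi i * B) (pick (insert i T - {i}) q)) (card (insert i T - {i}))"
    proof (rule gram_remove[OF QB QiB iTd])
      show "i \<in> insert i T" by simp
      show "col (Q * B) i \<noteq> 0\<^sub>v n" using colQB[OF id] i unfolding I_def by simp
      fix j assume j: "j < d"
      show "col (Qi i * B) j = col (Q * B) j - (col (Q * B) i \<bullet> col (Q * B) j / (col (Q * B) i \<bullet> col (Q * B) i)) \<cdot>\<^sub>v col (Q * B) i"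
        using colQi[OF i j] colQB[OF j] colQB[OF id] by simp
    qed
    have e: "insert i T - {i} = T" using iT by simp
    have p1: "Qproj (Q * B) (insert i T) * Q = Qproj B (S \<union> insert i T)"
      unfolding Q_def by (rule Qproj_comp[OF B S iTd])
    have Si: "S \<union> {i} \<subseteq> {0..<d}" using S id by auto
    have p2: "Qproj (Qi i * B) T * Qi i = Qproj B (S \<union> {i} \<union> T)"
      unfolding Qi_def by (rule Qproj_comp[OF B Si Td])
    have "S \<union> insert i T = S \<union> {i} \<union> T" by auto
    thus ?thesis unfolding g_def h_def using gr e p1 p2 colQB[OF id] by simp
  qed
  have mTT: "card T = m" if "T \<in> TT m" for T using that unfolding TT_def by simp
  have "Polynomial.smult (real m) (\<Sum>T\<in>TT m. g T) = (\<Sum>T\<in>TT m. \<Sum>i\<in>T. g T)"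
    unfolding smult_sum_right using mTT smult_card by (intro sum.cong) auto
  also have "\<dots> = (\<Sum>T\<in>TT m. \<Sum>i\<in>{i. i \<in> I \<and> i \<in> T}. g T)"
  proof (rule sum.cong[OF refl])
    fix T assume T: "T \<in> TT m"
    have sub: "{i. i \<in> I \<and> i \<in> T} \<subseteq> T" by auto
    show "(\<Sum>i\<in>T. g T) = (\<Sum>i\<in>{i. i \<in> I \<and> i \<in> T}. g T)"
    proof (rule sum.mono_neutral_right[OF fT[OF T] sub], intro ballI)
      fix i assume "i \<in> T - {i. i \<in> I \<and> i \<in> T}"
      hence iT: "i \<in> T" and "i \<notin> I" by auto
      moreover have "i < d" using T iT unfolding TT_def by auto
      ultimately have "u i = 0\<^sub>v n" unfolding I_def by auto
      thus "g T = 0" using F1[OF T iT] by simp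
    qed
  qed
  also have "\<dots> = (\<Sum>i\<in>I. \<Sum>T\<in>{T. T \<in> TT m \<and> i \<in> T}. g T)"
    by (rule sum.swap_restrict[OF finTT finI])
  also have "\<dots> = (\<Sum>i\<in>I. Polynomial.smult (u i \<bullet> u i) (\<Sum>T\<in>TT (m - 1). h i T))"
  proof (rule sum.cong[OF refl])
    fix i assume i: "i \<in> I"
    have id: "i < d" using i unfolding I_def by simp
    have bij: "bij_betw (insert i) {T. T \<in> TT (m - 1) \<and> i \<notin> T} {T. T \<in> TT m \<and> i \<in> T}"
    proof (rule bij_betw_byWitness[where f' = "\<lambda>T. T - {i}"])
      show "\<forall>a\<in>{T \<in> TT (m - 1). i \<notin> T}. insert i a - {i} = a" by auto
      show "\<forall>a'\<in>{T \<in> TT m. i \<in> T}. insert i (a' - {i}) = a'" by auto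
      show "insert i ` {T \<in> TT (m - 1). i \<notin> T} \<subseteq> {T \<in> TT m. i \<in> T}"
      proof
        fix X assume "X \<in> insert i ` {T \<in> TT (m - 1). i \<notin> T}"
        then obtain T where T: "T \<in> TT (m - 1)" "i \<notin> T" "X = insert i T" by auto
        have "card X = m" using T fT[OF T(1)] m unfolding TT_def by auto
        thus "X \<in> {T \<in> TT m. i \<in> T}" using T id unfolding TT_def by auto
      qed
      show "(\<lambda>T. T - {i}) ` {T \<in> TT m. i \<in> T} \<subseteq> {T \<in> TT (m - 1). i \<notin> T}"
      proof
        fix X assume "X \<in> (\<lambda>T. T - {i}) ` {T \<in> TT m. i \<in> T}"
        then obtain T where T: "T \<in> TT m" "i \<in> T" "X = T - {i}" by auto
        have "card X = m - 1" using T fT[OF T(1)] unfolding TT_def by auto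
        thus "X \<in> {T \<in> TT (m - 1). i \<notin> T}" using T unfolding TT_def by auto
      qed
    qed
    have "(\<Sum>T\<in>{T. T \<in> TT m \<and> i \<in> T}. g T) = (\<Sum>T\<in>{T. T \<in> TT (m - 1) \<and> i \<notin> T}. g (insert i T))"
      by (rule sum.reindex_bij_betw[OF bij, symmetric])
    also have "\<dots> = (\<Sum>T\<in>{T. T \<in> TT (m - 1) \<and> i \<notin> T}. Polynomial.smult (u i \<bullet> u i) (h i T))"
      using F3[OF i] by (intro sum.cong) auto
    also have "\<dots> = Polynomial.smult (u i \<bullet> u i) (\<Sum>T\<in>{T. T \<in> TT (m - 1) \<and> i \<notin> T}. h i T)"
      by (simp add: smult_sum_right)
    also have "(\<Sum>T\<in>{T. T \<in> TT (m - 1) \<and> i \<notin> T}. h i T) = (\<Sum>T\<in>TT (m - 1). h i T)"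
      by (rule sum.mono_neutral_left[OF finTT]) (auto intro: F2[OF i])
    finally show "(\<Sum>T\<in>{T. T \<in> TT m \<and> i \<in> T}. g T) = Polynomial.smult (u i \<bullet> u i) (\<Sum>T\<in>TT (m - 1). h i T)" .
  qed
  finally have main: "Polynomial.smult (real m) (\<Sum>T\<in>TT m. g T) =
      (\<Sum>i\<in>I. Polynomial.smult (u i \<bullet> u i) (\<Sum>T\<in>TT (m - 1). h i T))" .
  have "(\<Sum>T\<in>TT m. g T) = Polynomial.smult (1 / real m) (Polynomial.smult (real m) (\<Sum>T\<in>TT m. g T))"
    using m by simp
  also note main
  finally show ?thesis unfolding g_def h_def TT_def I_def u_def Qi_def Q_def .
qed

lemma submatrix_transpose: "transpose_mat (submatrix A I J) = submatrix (transpose_mat A) J I"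
proof (rule eq_matI)
  fix i j assume ij: "i < dim_row (submatrix (transpose_mat A) J I)" "j < dim_col (submatrix (transpose_mat A) J I)"
  hence i: "i < card {a. a < dim_col A \<and> a \<in> J}" and j: "j < card {a. a < dim_row A \<and> a \<in> I}"
    by (auto simp: dim_submatrix)
  have pi: "pick J i < dim_col A" using pick_le[OF i] .
  have pj: "pick I j < dim_row A" using pick_le[OF j] .
  show "transpose_mat (submatrix A I J) $$ (i, j) = submatrix (transpose_mat A) J I $$ (i, j)"
    using i j pi pj by (simp add: dim_submatrix submatrix_index)
qed (auto simp: dim_submatrix)

lemma rows_sub_cols_sub: "rows_sub C W = transpose_mat (cols_sub (transpose_mat C) W)"
  unfolding rows_sub_def cols_sub_def submatrix_transpose by simp

lemma Pproj_Qproj: "Pproj C W = Qproj (transpose_mat C) W"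
proof -
  define Z where "Z = cols_sub (transpose_mat C) W"
  have pen: "penrose Z (pinv Z)" by (rule pinv_penrose')
  have Zc: "Z \<in> carrier_mat (dim_row Z) (dim_col Z)" by (rule carrier_matI) auto
  have Xc: "pinv Z \<in> carrier_mat (dim_col Z) (dim_row Z)" using pen unfolding penrose_def by auto
  have s: "transpose_mat (Z * pinv Z) = Z * pinv Z" using pen unfolding penrose_def by auto
  have "pinv (rows_sub C W) * rows_sub C W = transpose_mat (pinv Z) * transpose_mat Z"
    unfolding rows_sub_cols_sub Z_def[symmetric] pinv_transpose ..
  also have "\<dots> = transpose_mat (Z * pinv Z)" by (rule transpose_mult[OF Zc Xc, symmetric])
  also have "\<dots> = Z * pinv Z" by (rule s)
  finally show ?thesis unfolding Pproj_def Qproj_def Z_def by simp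
qed

lemma Pproj_carrier: "C \<in> carrier_mat nC d \<Longrightarrow> Pproj C W \<in> carrier_mat d d"
  unfolding Pproj_Qproj using Qproj_carrier[of "transpose_mat C" W] by simp

lemma Pproj_sym: "transpose_mat (Pproj C W) = Pproj C W"
  unfolding Pproj_Qproj by (rule Qproj_sym)

lemma transpose_CP: assumes C: "C \<in> carrier_mat nC d"
  shows "transpose_mat (C * Pproj C R) = Qproj (transpose_mat C) R * transpose_mat C"
proof -
  have P: "Pproj C R \<in> carrier_mat d d" by (rule Pproj_carrier[OF C])
  have "transpose_mat (C * Pproj C R) = transpose_mat (Pproj C R) * transpose_mat C"
    by (rule transpose_mult[OF C P])
  thus ?thesis unfolding Pproj_sym unfolding Pproj_Qproj .
qed

lemma vnorm_sq: "(vnorm v)\<^sup>2 = v \<bullet> v"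
  unfolding vnorm_def using dot_self_nonneg[of v] by simp

lemma vnorm_zero[simp]: "vnorm (0\<^sub>v n) = 0"
  unfolding vnorm_def by simp

lemma vnorm_nz: assumes "v \<in> carrier_vec n" shows "(vnorm v \<noteq> 0) = (v \<noteq> 0\<^sub>v n)"
proof
  assume "vnorm v \<noteq> 0" thus "v \<noteq> 0\<^sub>v n" unfolding vnorm_def using assms by auto
next
  assume "v \<noteq> 0\<^sub>v n" thus "vnorm v \<noteq> 0" unfolding vnorm_def using dot_self_zero[OF assms] by auto
qed

lemma Pkr_expand: assumes B': "B' \<in> carrier_mat n dB" and C': "C' \<in> carrier_mat nC d"
  shows "Pkr k r A' B' C' = (\<Sum>W | W \<subseteq> {0..<nC} \<and> card W = r.
     Polynomial.smult (gm (\<lambda>p. col (transpose_mat C') (pick W p)) (card W))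
       (\<Sum>T | T \<subseteq> {0..<dB} \<and> card T = k.
          Polynomial.smult (gm (\<lambda>p. col B' (pick T p)) (card T)) (pTW T W A' B' C')))"
  unfolding Pkr_def
proof (rule sum.cong)
  show "{W. W \<subseteq> {0..<dim_row C'} \<and> card W = r} = {W. W \<subseteq> {0..<nC} \<and> card W = r}" using C' by simp
  fix W assume "W \<in> {W. W \<subseteq> {0..<nC} \<and> card W = r}"
  hence W: "W \<subseteq> {0..<nC}" by simp
  have Ct: "transpose_mat C' \<in> carrier_mat d nC" using C' by simp
  have cw: "det (rows_sub C' W * transpose_mat (rows_sub C' W)) = gm (\<lambda>p. col (transpose_mat C') (pick W p)) (card W)"
    unfolding rows_sub_cols_sub transpose_transpose by (rule gram_cols[OF Ct W])
  show "(\<Sum>T | T \<subseteq> {0..<dim_col B'} \<and> card T = k.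
          Polynomial.smult (det (rows_sub C' W * transpose_mat (rows_sub C' W)) *
            det (transpose_mat (cols_sub B' T) * cols_sub B' T)) (pTW T W A' B' C')) =
        Polynomial.smult (gm (\<lambda>p. col (transpose_mat C') (pick W p)) (card W))
         (\<Sum>T | T \<subseteq> {0..<dB} \<and> card T = k.
            Polynomial.smult (gm (\<lambda>p. col B' (pick T p)) (card T)) (pTW T W A' B' C'))"
    unfolding cw smult_sum_right smult_smult using B'
    by (intro sum.cong) (auto simp: gram_cols[OF B'])
qed

lemma poly_swap: "(\<Sum>w\<in>Ww. Polynomial.smult (c w) (Polynomial.smult z (\<Sum>i\<in>I. Polynomial.smult (a i) (Y i w))))
   = Polynomial.smult z (\<Sum>i\<in>I. Polynomial.smult (a i) (\<Sum>w\<in>Ww. Polynomial.smult (c w) (Y i w)))"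
proof -
  have "(\<Sum>w\<in>Ww. Polynomial.smult (c w) (Polynomial.smult z (\<Sum>i\<in>I. Polynomial.smult (a i) (Y i w))))
     = (\<Sum>w\<in>Ww. \<Sum>i\<in>I. Polynomial.smult (z * (a i * c w)) (Y i w))"
    by (simp add: smult_sum_right smult_smult mult_ac)
  also have "\<dots> = (\<Sum>i\<in>I. \<Sum>w\<in>Ww. Polynomial.smult (z * (a i * c w)) (Y i w))" by (rule sum.swap)
  also have "\<dots> = Polynomial.smult z (\<Sum>i\<in>I. Polynomial.smult (a i) (\<Sum>w\<in>Ww. Polynomial.smult (c w) (Y i w)))"
    by (simp add: smult_sum_right smult_smult mult_ac)
  finally show ?thesis .
qed

lemma poly_swap2: "(\<Sum>w\<in>Ww. Polynomial.smult (c w) (\<Sum>t\<in>Tt. Polynomial.smult (b t) (Z t w)))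
   = (\<Sum>t\<in>Tt. Polynomial.smult (b t) (\<Sum>w\<in>Ww. Polynomial.smult (c w) (Z t w)))"
proof -
  have "(\<Sum>w\<in>Ww. Polynomial.smult (c w) (\<Sum>t\<in>Tt. Polynomial.smult (b t) (Z t w)))
     = (\<Sum>w\<in>Ww. \<Sum>t\<in>Tt. Polynomial.smult (b t * c w) (Z t w))"
    by (simp add: smult_sum_right smult_smult mult_ac)
  also have "\<dots> = (\<Sum>t\<in>Tt. \<Sum>w\<in>Ww. Polynomial.smult (b t * c w) (Z t w))" by (rule sum.swap)
  also have "\<dots> = (\<Sum>t\<in>Tt. Polynomial.smult (b t) (\<Sum>w\<in>Ww. Polynomial.smult (c w) (Z t w)))"
    by (simp add: smult_sum_right smult_smult mult_ac)
  finally show ?thesis .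
qed

lemma assoc_B: assumes X: "(X1::real mat) \<in> carrier_mat a a" and Y: "Y \<in> carrier_mat a a" and A: "A \<in> carrier_mat a b"
  and P: "P \<in> carrier_mat b b" and PW: "PW \<in> carrier_mat b b"
  shows "X1 * (Y * A * P) * PW = (X1 * Y) * (A * P * PW)"
proof -
  have XY: "X1 * Y \<in> carrier_mat a a" using X Y by simp
  have YA: "Y * A \<in> carrier_mat a b" using Y A by simp
  have XYA: "X1 * Y * A \<in> carrier_mat a b" using XY A by simp
  have "X1 * (Y * A * P) = X1 * (Y * A) * P" by (rule assoc_mult_mat[symmetric, OF X YA P])
  also have "X1 * (Y * A) = X1 * Y * A" by (rule assoc_mult_mat[symmetric, OF X Y A])
  finally have e1: "X1 * (Y * A * P) * PW = X1 * Y * A * P * PW" by simp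
  have "X1 * Y * A * P * PW = (X1 * Y * A) * (P * PW)" by (rule assoc_mult_mat[OF _ P PW], insert XYA P, simp)
  also have "\<dots> = (X1 * Y) * (A * (P * PW))" by (rule assoc_mult_mat[OF XY A mult_carrier_mat[OF P PW]])
  also have "A * (P * PW) = A * P * PW" by (rule assoc_mult_mat[symmetric, OF A P PW])
  finally show ?thesis using e1 by simp
qed

lemma assoc_C: assumes X: "(X1::real mat) \<in> carrier_mat a a" and Y: "Y \<in> carrier_mat a a" and A: "A \<in> carrier_mat a b"
  and P: "P \<in> carrier_mat b b" and PW: "PW \<in> carrier_mat b b"
  shows "X1 * (Y * A * P) * PW = (X1 * Y * A) * (P * PW)"
proof -
  have XY: "X1 * Y \<in> carrier_mat a a" using X Y by simp
  have YA: "Y * A \<in> carrier_mat a b" using Y A by simp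
  have XYA: "X1 * Y * A \<in> carrier_mat a b" using XY A by simp
  have "X1 * (Y * A * P) = X1 * (Y * A) * P" by (rule assoc_mult_mat[symmetric, OF X YA P])
  also have "X1 * (Y * A) = X1 * Y * A" by (rule assoc_mult_mat[symmetric, OF X Y A])
  finally have e1: "X1 * (Y * A * P) * PW = X1 * Y * A * P * PW" by simp
  have "X1 * Y * A * P * PW = (X1 * Y * A) * (P * PW)" by (rule assoc_mult_mat[OF XYA P PW])
  thus ?thesis using e1 by simp
qed

theorem proposition3p6:
  fixes A B C :: "real mat" and n d dB nC k r l t :: nat and S R :: "nat set"
  assumes "A \<in> carrier_mat n d" and "B \<in> carrier_mat n dB" and "C \<in> carrier_mat nC d"
    and "1 \<le> k" and "k \<le> mrank B" and "1 \<le> r" and "r \<le> mrank C"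
    and "S \<subseteq> {0..<dB}" and "card S = l" and "l \<le> k - 1"
    and "R \<subseteq> {0..<nC}" and "card R = t" and "t \<le> r - 1"
  shows
    "Pkr (k - l) (r - t) (Qproj B S * A * Pproj C R) (Qproj B S * B) (C * Pproj C R) =
       Polynomial.smult (1 / real (k - l))
         (\<Sum>i | i \<in> {0..<dB} \<and> vnorm (Qproj B S *\<^sub>v col B i) \<noteq> 0.
            Polynomial.smult ((vnorm (Qproj B S *\<^sub>v col B i))\<^sup>2)
              (Pkr (k - l - 1) (r - t) (Qproj B (S \<union> {i}) * A * Pproj C R)
                   (Qproj B (S \<union> {i}) * B) (C * Pproj C R)))
     \<and>
     Pkr (k - l) (r - t) (Qproj B S * A * Pproj C R) (Qproj B S * B) (C * Pproj C R) =
       Polynomial.smult (1 / real (r - t))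
         (\<Sum>i | i \<in> {0..<nC} \<and> vnorm (transpose_mat (Pproj C R) *\<^sub>v row C i) \<noteq> 0.
            Polynomial.smult ((vnorm (transpose_mat (Pproj C R) *\<^sub>v row C i))\<^sup>2)
              (Pkr (k - l) (r - t - 1) (Qproj B S * A * Pproj C (R \<union> {i}))
                   (Qproj B S * B) (C * Pproj C (R \<union> {i}))))"
  proof -
  note A = assms(1) and B = assms(2) and C = assms(3)
  define Q where "Q = Qproj B S"
  define P where "P = Pproj C R"
  define Ct where "Ct = transpose_mat C"
  have Ctc: "Ct \<in> carrier_mat d nC" unfolding Ct_def using C by simp
  have Qc: "Q \<in> carrier_mat n n" unfolding Q_def using Qproj_carrier[of B S] B by simp
  have Pc: "P \<in> carrier_mat d d" unfolding P_def by (rule Pproj_carrier[OF C])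
  have PQ: "P = Qproj Ct R" unfolding P_def Ct_def by (rule Pproj_Qproj)
  have QBc: "Q * B \<in> carrier_mat n dB" using Qc B by simp
  have CPc: "C * P \<in> carrier_mat nC d" using C Pc by simp
  have Sd: "S \<subseteq> {0..<dB}" and Rn: "R \<subseteq> {0..<nC}" using assms by auto
  have m1: "1 \<le> k - l" and m2: "1 \<le> r - t" using assms by auto
  have Qic: "Qproj B (S \<union> {i}) \<in> carrier_mat n n" for i using Qproj_carrier[of B "S \<union> {i}"] B by simp
  have QTc: "Qproj X T \<in> carrier_mat n n" if "X \<in> carrier_mat n dB" for X T
    using Qproj_carrier[of X T] that by simp
  have QiBc: "Qproj B (S \<union> {i}) * B \<in> carrier_mat n dB" for i using mult_carrier_mat[OF Qic B] .
  define F where "F W X = char_poly (transpose_mat (X * (A * P * Pproj (C * P) W)) * (X * (A * P * Pproj (C * P) W)))" for W X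
  have PWc: "Pproj (C * P) W \<in> carrier_mat d d" for W using Pproj_carrier[OF CPc] .
  have pT1: "pTW T W (Q * A * P) (Q * B) (C * P) = F W (Qproj (Q * B) T * Q)" for T W
    unfolding pTW_def Let_def F_def using assoc_B[OF QTc[OF QBc] Qc A Pc PWc] by simp
  have pT1i: "pTW T W (Qproj B (S \<union> {i}) * A * P) (Qproj B (S \<union> {i}) * B) (C * P)
      = F W (Qproj (Qproj B (S \<union> {i}) * B) T * Qproj B (S \<union> {i}))" for T W i
    unfolding pTW_def Let_def F_def using assoc_B[OF QTc[OF QiBc] Qic A Pc PWc] by simp
  have part1: "Pkr (k - l) (r - t) (Q * A * P) (Q * B) (C * P) =
       Polynomial.smult (1 / real (k - l))
         (\<Sum>i | i \<in> {0..<dB} \<and> vnorm (Q *\<^sub>v col B i) \<noteq> 0.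
            Polynomial.smult ((vnorm (Q *\<^sub>v col B i))\<^sup>2)
              (Pkr (k - l - 1) (r - t) (Qproj B (S \<union> {i}) * A * P)
                   (Qproj B (S \<union> {i}) * B) (C * P)))"
  proof -
    have "Pkr (k - l) (r - t) (Q * A * P) (Q * B) (C * P) =
      (\<Sum>W | W \<subseteq> {0..<nC} \<and> card W = r - t.
        Polynomial.smult (gm (\<lambda>p. col (transpose_mat (C * P)) (pick W p)) (card W))
          (\<Sum>T | T \<subseteq> {0..<dB} \<and> card T = k - l.
            Polynomial.smult (gm (\<lambda>p. col (Q * B) (pick T p)) (card T)) (F W (Qproj (Q * B) T * Q))))"
      unfolding Pkr_expand[OF QBc CPc] pT1 ..
    also have "\<dots> = (\<Sum>W | W \<subseteq> {0..<nC} \<and> card W = r - t.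
        Polynomial.smult (gm (\<lambda>p. col (transpose_mat (C * P)) (pick W p)) (card W))
          (Polynomial.smult (1 / real (k - l)) (\<Sum>i | i \<in> {0..<dB} \<and> Q *\<^sub>v col B i \<noteq> 0\<^sub>v n.
            Polynomial.smult ((Q *\<^sub>v col B i) \<bullet> (Q *\<^sub>v col B i))
              (\<Sum>T | T \<subseteq> {0..<dB} \<and> card T = k - l - 1.
                 Polynomial.smult (gm (\<lambda>p. col (Qproj B (S \<union> {i}) * B) (pick T p)) (card T))
                   (F W (Qproj (Qproj B (S \<union> {i}) * B) T * Qproj B (S \<union> {i})))))))"
    proof (rule sum.cong[OF refl])
      fix W
      show "Polynomial.smult (gm (\<lambda>p. col (transpose_mat (C * P)) (pick W p)) (card W))
          (\<Sum>T | T \<subseteq> {0..<dB} \<and> card T = k - l.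
            Polynomial.smult (gm (\<lambda>p. col (Q * B) (pick T p)) (card T)) (F W (Qproj (Q * B) T * Q))) =
        Polynomial.smult (gm (\<lambda>p. col (transpose_mat (C * P)) (pick W p)) (card W))
          (Polynomial.smult (1 / real (k - l)) (\<Sum>i | i \<in> {0..<dB} \<and> Q *\<^sub>v col B i \<noteq> 0\<^sub>v n.
            Polynomial.smult ((Q *\<^sub>v col B i) \<bullet> (Q *\<^sub>v col B i))
              (\<Sum>T | T \<subseteq> {0..<dB} \<and> card T = k - l - 1.
                 Polynomial.smult (gm (\<lambda>p. col (Qproj B (S \<union> {i}) * B) (pick T p)) (card T))
                   (F W (Qproj (Qproj B (S \<union> {i}) * B) T * Qproj B (S \<union> {i}))))))"
        using comb[OF B Sd m1, where F = "F W", folded Q_def] by simp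
    qed
    also have "\<dots> = Polynomial.smult (1 / real (k - l)) (\<Sum>i | i \<in> {0..<dB} \<and> Q *\<^sub>v col B i \<noteq> 0\<^sub>v n.
            Polynomial.smult ((Q *\<^sub>v col B i) \<bullet> (Q *\<^sub>v col B i))
              (\<Sum>W | W \<subseteq> {0..<nC} \<and> card W = r - t.
                Polynomial.smult (gm (\<lambda>p. col (transpose_mat (C * P)) (pick W p)) (card W))
              (\<Sum>T | T \<subseteq> {0..<dB} \<and> card T = k - l - 1.
                 Polynomial.smult (gm (\<lambda>p. col (Qproj B (S \<union> {i}) * B) (pick T p)) (card T))
                   (F W (Qproj (Qproj B (S \<union> {i}) * B) T * Qproj B (S \<union> {i}))))))"
      by (rule poly_swap)
    also have "\<dots> = Polynomial.smult (1 / real (k - l))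
         (\<Sum>i | i \<in> {0..<dB} \<and> vnorm (Q *\<^sub>v col B i) \<noteq> 0.
            Polynomial.smult ((vnorm (Q *\<^sub>v col B i))\<^sup>2)
              (Pkr (k - l - 1) (r - t) (Qproj B (S \<union> {i}) * A * P)
                   (Qproj B (S \<union> {i}) * B) (C * P)))"
    proof (rule arg_cong[where f = "Polynomial.smult _"], rule sum.cong)
      show "{i. i \<in> {0..<dB} \<and> Q *\<^sub>v col B i \<noteq> 0\<^sub>v n} = {i. i \<in> {0..<dB} \<and> vnorm (Q *\<^sub>v col B i) \<noteq> 0}"
        using vnorm_nz[of "Q *\<^sub>v col B i" n for i] Qc B by (auto simp: col_carrier_n)
      fix i
      show "Polynomial.smult ((Q *\<^sub>v col B i) \<bullet> (Q *\<^sub>v col B i))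
              (\<Sum>W | W \<subseteq> {0..<nC} \<and> card W = r - t.
                Polynomial.smult (gm (\<lambda>p. col (transpose_mat (C * P)) (pick W p)) (card W))
              (\<Sum>T | T \<subseteq> {0..<dB} \<and> card T = k - l - 1.
                 Polynomial.smult (gm (\<lambda>p. col (Qproj B (S \<union> {i}) * B) (pick T p)) (card T))
                   (F W (Qproj (Qproj B (S \<union> {i}) * B) T * Qproj B (S \<union> {i}))))) =
            Polynomial.smult ((vnorm (Q *\<^sub>v col B i))\<^sup>2)
              (Pkr (k - l - 1) (r - t) (Qproj B (S \<union> {i}) * A * P)
                   (Qproj B (S \<union> {i}) * B) (C * P))"
        unfolding Pkr_expand[OF QiBc CPc] pT1i vnorm_sq ..
    qed
    finally show ?thesis .
  qed
  define M where "M T = Qproj (Q * B) T * Q * A" for T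
  define G where "G T X = char_poly (transpose_mat (M T * transpose_mat X) * (M T * transpose_mat X))" for T X
  have pT2: "pTW T W (Q * A * Pproj C R') (Q * B) (C * Pproj C R') = G T (Qproj (Qproj Ct R' * Ct) W * Qproj Ct R')"
    for T W R'
  proof -
    have Pc': "Pproj C R' \<in> carrier_mat d d" by (rule Pproj_carrier[OF C])
    have PQ': "Pproj C R' = Qproj Ct R'" unfolding Ct_def by (rule Pproj_Qproj)
    have e1: "Pproj (C * Pproj C R') W = Qproj (Qproj Ct R' * Ct) W"
      unfolding Pproj_Qproj[of "C * Pproj C R'"] transpose_CP[OF C] Ct_def ..
    have Xc: "Qproj Ct R' * Ct \<in> carrier_mat d nC" using Qproj_carrier[of Ct R'] Ctc by simp
    have dX: "dim_row (Qproj Ct R' * Ct) = d" using Xc by auto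
    have QWc: "Qproj (Qproj Ct R' * Ct) W \<in> carrier_mat d d" using Qproj_carrier[of "Qproj Ct R' * Ct" W] unfolding dX .
    have e2: "Pproj C R' * Qproj (Qproj Ct R' * Ct) W = transpose_mat (Qproj (Qproj Ct R' * Ct) W * Qproj Ct R')"
      unfolding transpose_mult[OF QWc Pc'[unfolded PQ']] Qproj_sym PQ' ..
    show ?thesis unfolding pTW_def Let_def G_def M_def e1
      using assoc_C[OF QTc[OF QBc] Qc A Pc' QWc] e2 by simp
  qed
  have part2: "Pkr (k - l) (r - t) (Q * A * P) (Q * B) (C * P) =
       Polynomial.smult (1 / real (r - t))
         (\<Sum>i | i \<in> {0..<nC} \<and> vnorm (transpose_mat P *\<^sub>v row C i) \<noteq> 0.
            Polynomial.smult ((vnorm (transpose_mat P *\<^sub>v row C i))\<^sup>2)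
              (Pkr (k - l) (r - t - 1) (Q * A * Pproj C (R \<union> {i}))
                   (Q * B) (C * Pproj C (R \<union> {i}))))"
  proof -
    have CPi: "C * Pproj C R' \<in> carrier_mat nC d" for R' using C Pproj_carrier[OF C] by simp
    have expand: "Pkr k' r' (Q * A * Pproj C R') (Q * B) (C * Pproj C R') =
      (\<Sum>T | T \<subseteq> {0..<dB} \<and> card T = k'.
        Polynomial.smult (gm (\<lambda>p. col (Q * B) (pick T p)) (card T))
          (\<Sum>W | W \<subseteq> {0..<nC} \<and> card W = r'.
            Polynomial.smult (gm (\<lambda>p. col (Qproj Ct R' * Ct) (pick W p)) (card W))
              (G T (Qproj (Qproj Ct R' * Ct) W * Qproj Ct R'))))" for k' r' R'
      unfolding Pkr_expand[OF QBc CPi] by (subst poly_swap2) (simp only: pT2 transpose_CP[OF C] Ct_def)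
    have "Pkr (k - l) (r - t) (Q * A * P) (Q * B) (C * P) =
      (\<Sum>T | T \<subseteq> {0..<dB} \<and> card T = k - l.
        Polynomial.smult (gm (\<lambda>p. col (Q * B) (pick T p)) (card T))
          (\<Sum>W | W \<subseteq> {0..<nC} \<and> card W = r - t.
            Polynomial.smult (gm (\<lambda>p. col (Qproj Ct R * Ct) (pick W p)) (card W))
              (G T (Qproj (Qproj Ct R * Ct) W * Qproj Ct R))))"
      unfolding P_def by (rule expand)
    also have "\<dots> = (\<Sum>T | T \<subseteq> {0..<dB} \<and> card T = k - l.
        Polynomial.smult (gm (\<lambda>p. col (Q * B) (pick T p)) (card T))
          (Polynomial.smult (1 / real (r - t)) (\<Sum>i | i \<in> {0..<nC} \<and> Qproj Ct R *\<^sub>v col Ct i \<noteq> 0\<^sub>v d.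
            Polynomial.smult ((Qproj Ct R *\<^sub>v col Ct i) \<bullet> (Qproj Ct R *\<^sub>v col Ct i))
              (\<Sum>W | W \<subseteq> {0..<nC} \<and> card W = r - t - 1.
                 Polynomial.smult (gm (\<lambda>p. col (Qproj Ct (R \<union> {i}) * Ct) (pick W p)) (card W))
                   (G T (Qproj (Qproj Ct (R \<union> {i}) * Ct) W * Qproj Ct (R \<union> {i})))))))"
    proof (rule sum.cong[OF refl])
      fix T
      show "Polynomial.smult (gm (\<lambda>p. col (Q * B) (pick T p)) (card T))
          (\<Sum>W | W \<subseteq> {0..<nC} \<and> card W = r - t.
            Polynomial.smult (gm (\<lambda>p. col (Qproj Ct R * Ct) (pick W p)) (card W))
              (G T (Qproj (Qproj Ct R * Ct) W * Qproj Ct R))) =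
        Polynomial.smult (gm (\<lambda>p. col (Q * B) (pick T p)) (card T))
          (Polynomial.smult (1 / real (r - t)) (\<Sum>i | i \<in> {0..<nC} \<and> Qproj Ct R *\<^sub>v col Ct i \<noteq> 0\<^sub>v d.
            Polynomial.smult ((Qproj Ct R *\<^sub>v col Ct i) \<bullet> (Qproj Ct R *\<^sub>v col Ct i))
              (\<Sum>W | W \<subseteq> {0..<nC} \<and> card W = r - t - 1.
                 Polynomial.smult (gm (\<lambda>p. col (Qproj Ct (R \<union> {i}) * Ct) (pick W p)) (card W))
                   (G T (Qproj (Qproj Ct (R \<union> {i}) * Ct) W * Qproj Ct (R \<union> {i}))))))"
        using comb[OF Ctc Rn m2, where F = "G T"] by simp
    qed
    also have "\<dots> = Polynomial.smult (1 / real (r - t)) (\<Sum>i | i \<in> {0..<nC} \<and> Qproj Ct R *\<^sub>v col Ct i \<noteq> 0\<^sub>v d.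
            Polynomial.smult ((Qproj Ct R *\<^sub>v col Ct i) \<bullet> (Qproj Ct R *\<^sub>v col Ct i))
              (\<Sum>T | T \<subseteq> {0..<dB} \<and> card T = k - l.
                Polynomial.smult (gm (\<lambda>p. col (Q * B) (pick T p)) (card T))
              (\<Sum>W | W \<subseteq> {0..<nC} \<and> card W = r - t - 1.
                 Polynomial.smult (gm (\<lambda>p. col (Qproj Ct (R \<union> {i}) * Ct) (pick W p)) (card W))
                   (G T (Qproj (Qproj Ct (R \<union> {i}) * Ct) W * Qproj Ct (R \<union> {i}))))))"
      by (rule poly_swap)
    also have "\<dots> = Polynomial.smult (1 / real (r - t))
         (\<Sum>i | i \<in> {0..<nC} \<and> vnorm (transpose_mat P *\<^sub>v row C i) \<noteq> 0.
            Polynomial.smult ((vnorm (transpose_mat P *\<^sub>v row C i))\<^sup>2)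
              (Pkr (k - l) (r - t - 1) (Q * A * Pproj C (R \<union> {i}))
                   (Q * B) (C * Pproj C (R \<union> {i}))))"
    proof (rule arg_cong[where f = "Polynomial.smult _"], rule sum.cong)
      have rowC: "transpose_mat P *\<^sub>v row C i = Qproj Ct R *\<^sub>v col Ct i" if "i < nC" for i
        unfolding PQ Ct_def using that C by (simp add: Qproj_sym)
      have vc: "Qproj Ct R *\<^sub>v col Ct i \<in> carrier_vec d" for i
        using Qproj_carrier[of Ct R] Ctc by (simp add: col_carrier_n)
      show "{i. i \<in> {0..<nC} \<and> Qproj Ct R *\<^sub>v col Ct i \<noteq> 0\<^sub>v d} =
            {i. i \<in> {0..<nC} \<and> vnorm (transpose_mat P *\<^sub>v row C i) \<noteq> 0}"
        using vnorm_nz[OF vc] rowC by auto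
      fix i assume "i \<in> {i. i \<in> {0..<nC} \<and> vnorm (transpose_mat P *\<^sub>v row C i) \<noteq> 0}"
      hence i: "i < nC" by simp
      show "Polynomial.smult ((Qproj Ct R *\<^sub>v col Ct i) \<bullet> (Qproj Ct R *\<^sub>v col Ct i))
              (\<Sum>T | T \<subseteq> {0..<dB} \<and> card T = k - l.
                Polynomial.smult (gm (\<lambda>p. col (Q * B) (pick T p)) (card T))
              (\<Sum>W | W \<subseteq> {0..<nC} \<and> card W = r - t - 1.
                 Polynomial.smult (gm (\<lambda>p. col (Qproj Ct (R \<union> {i}) * Ct) (pick W p)) (card W))
                   (G T (Qproj (Qproj Ct (R \<union> {i}) * Ct) W * Qproj Ct (R \<union> {i}))))) =
            Polynomial.smult ((vnorm (transpose_mat P *\<^sub>v row C i))\<^sup>2)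
              (Pkr (k - l) (r - t - 1) (Q * A * Pproj C (R \<union> {i}))
                   (Q * B) (C * Pproj C (R \<union> {i})))"
        unfolding expand vnorm_sq rowC[OF i] ..
    qed
    finally show ?thesis .
  qed
  show ?thesis using part1 part2 unfolding Q_def P_def by (rule conjI)
qed

end
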